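(* For arbitrary operators $X,Y$ on $(\mathbb{C}^d)^{\otimes 2p}$, all partitions $\mu,\nu,\mu',\nu'$ of $p$ with at most $d$ rows, and all indices, $$\operatorname{tr}\Big(\operatorname{twirl}(X)\,(E^\mu_{ij}\otimes E^\nu_{kl})\,Y\,(E^{\mu'}_{i'j'}\otimes E^{\nu'}_{k'l'})\Big)=\delta^{\mu\mu'}\delta^{\nu\nu'}\delta_{ij'}\delta_{kl'}\,\frac{1}{d_\mu d_\nu}\sum_{r=1}^{d_\mu}\sum_{s=1}^{d_\nu}\operatorname{tr}\Big(X\,(E^\mu_{rj}\otimes E^\nu_{sl})\,Y\,(E^\mu_{i'r}\otimes E^\nu_{k's})\Big).$$
   Context: Fix integers $d\ge 2$, $p\ge 2$. For $\sigma\in\mathcal{S}_p$, $V_\sigma$ is the operator on $(\mathbb{C}^d)^{\otimes p}$ with $V_\sigma(v_1\otimes\cdots\otimes v_p)=v_{\sigma^{-1}(1)}\otimes\cdots\otimes v_{\sigma^{-1}(p)}$. $d_\mu$ is the number of standard Young tableaux of shape $\mu$; $\varphi^\mu$ is the irrep $\mu$ of $\mathcal{S}_p$ in Young's orthogonal (Young–Yamanouchi) basis and $E^\mu_{ij}=\frac{d_\mu}{p!}\sum_\sigma\varphi^\mu_{ji}(\sigma^{-1})V_\sigma$ ($1\le i,j\le d_\mu$) the irreducible matrix units. On $(\mathbb{C}^d)^{\otimes 2p}$ (systems $1,\ldots,2p$), $A\otimes B$ has $A$ on systems $1,\ldots,p$ (its $k$-th tensor slot is system $p+1-k$) and $B$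 on systems $p+1,\ldots,2p$ (its $k$-th slot is system $p+k$). The twirl is $\operatorname{twirl}(X)=\frac{1}{(p!)^2}\sum_{\sigma_1,\sigma_2\in\mathcal{S}_p}(V_{\sigma_1}\otimes V_{\sigma_2})X(V_{\sigma_1^{-1}}\otimes V_{\sigma_2^{-1}})$. *)

theory Defs
  imports Complex_Main "HOL-Combinatorics.Combinatorics"
begin

text \<open>Computational basis of (C^d)^{tensor n}: index lists of length n with entries < d.
  Slot k (1-based) of a tensor product is list position k-1.
  Operators are represented by their matrix entries; only entries on idx d n matter.\<close>

type_synonym op = "nat list \<Rightarrow> nat list \<Rightarrow> complex"

definition idx :: "nat \<Rightarrow> nat \<Rightarrow> nat list set" where
  "idx d n = {xs. length xs = n \<and> (\<forall>x\<in>set xs. x < d)}"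

definition opmul :: "nat \<Rightarrow> nat \<Rightarrow> op \<Rightarrow> op \<Rightarrow> op" where
  "opmul d n A B = (\<lambda>xs ys. \<Sum>zs\<in>idx d n. A xs zs * B zs ys)"

definition optr :: "nat \<Rightarrow> nat \<Rightarrow> op \<Rightarrow> complex" where
  "optr d n A = (\<Sum>xs\<in>idx d n. A xs xs)"

text \<open>Permutations of {1..p} act on p tensor slots:
  V_sigma (v_1 x ... x v_p) = v_{sigma^-1 1} x ... x v_{sigma^-1 p}.\<close>

definition Vperm :: "nat \<Rightarrow> (nat \<Rightarrow> nat) \<Rightarrow> op" where
  "Vperm p \<sigma> = (\<lambda>ys xs. of_bool (\<forall>k\<in>{1..p}. ys ! (k - 1) = xs ! (inv \<sigma> k - 1)))"

text \<open>A tensor B on 2p systems: the k-th slot of A is system p+1-k, the k-th slot of B is system p+k.\<close>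

definition tens :: "nat \<Rightarrow> op \<Rightarrow> op \<Rightarrow> op" where
  "tens p A B = (\<lambda>zs ws. A (rev (take p zs)) (rev (take p ws)) * B (drop p zs) (drop p ws))"

definition twirl :: "nat \<Rightarrow> nat \<Rightarrow> op \<Rightarrow> op" where
  "twirl d p X = (\<lambda>zs ws. (1 / (of_nat (fact p))\<^sup>2) *
     (\<Sum>\<sigma>1\<in>{\<sigma>. \<sigma> permutes {1..p}}. \<Sum>\<sigma>2\<in>{\<sigma>. \<sigma> permutes {1..p}}.
        opmul d (2*p) (opmul d (2*p) (tens p (Vperm p \<sigma>1) (Vperm p \<sigma>2)) X)
                      (tens p (Vperm p (inv \<sigma>1)) (Vperm p (inv \<sigma>2))) zs ws))"

definition is_partition :: "nat \<Rightarrow> nat list \<Rightarrow> bool" where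
  "is_partition p \<mu> \<longleftrightarrow> sum_list \<mu> = p \<and> sorted_wrt (\<ge>) \<mu> \<and> 0 \<notin> set \<mu>"

text \<open>Cells (row, column), 0-based.\<close>
definition cells :: "nat list \<Rightarrow> (nat \<times> nat) set" where
  "cells \<mu> = {(r, c). r < length \<mu> \<and> c < \<mu> ! r}"

definition syt :: "nat list \<Rightarrow> (nat \<times> nat \<Rightarrow> nat) set" where
  "syt \<mu> = {T. bij_betw T (cells \<mu>) {1..sum_list \<mu>}
              \<and> (\<forall>x. x \<notin> cells \<mu> \<longrightarrow> T x = 0)
              \<and> (\<forall>r c. (r, Suc c) \<in> cells \<mu> \<longrightarrow> T (r, c) < T (r, Suc c))
              \<and> (\<forall>r c. (Suc r, c) \<in> cells \<mu> \<longrightarrow> T (r, c) < T (Suc r, c))}"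

definition dim :: "nat list \<Rightarrow> nat" where
  "dim \<mu> = card (syt \<mu>)"

text \<open>A fixed enumeration 1..d_mu of the standard tableaux (the Young-Yamanouchi basis vectors).\<close>
definition tab :: "nat list \<Rightarrow> nat \<Rightarrow> (nat \<times> nat \<Rightarrow> nat)" where
  "tab \<mu> = (SOME f. bij_betw f {1..dim \<mu>} (syt \<mu>))"

definition content :: "nat list \<Rightarrow> (nat \<times> nat \<Rightarrow> nat) \<Rightarrow> nat \<Rightarrow> int" where
  "content \<mu> T k = (let x = (THE x. x \<in> cells \<mu> \<and> T x = k) in int (snd x) - int (fst x))"

text \<open>Young's orthogonal form of the adjacent transposition s_k = (k k+1), 1 <= k < p:
  phi(s_k) e_T = (1/rho) e_T + sqrt(1 - 1/rho^2) e_{s_k T}, rho = c(k+1) - c(k) (axial distance).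
  Entry (a,b) is the coefficient of e_{T_a} in phi(s_k) e_{T_b}.\<close>
definition young_gen :: "nat list \<Rightarrow> nat \<Rightarrow> nat \<Rightarrow> nat \<Rightarrow> complex" where
  "young_gen \<mu> k a b =
     (let Ta = tab \<mu> a; Tb = tab \<mu> b;
          \<rho> = real_of_int (content \<mu> Tb (Suc k) - content \<mu> Tb k)
      in if a = b then complex_of_real (1 / \<rho>)
         else if Ta = (\<lambda>x. Transposition.transpose k (Suc k) (Tb x))
              then complex_of_real (sqrt (1 - 1 / \<rho>\<^sup>2))
         else 0)"

definition matmul :: "nat \<Rightarrow> (nat \<Rightarrow> nat \<Rightarrow> complex) \<Rightarrow> (nat \<Rightarrow> nat \<Rightarrow> complex) \<Rightarrow> nat \<Rightarrow> nat \<Rightarrow> complex" where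
  "matmul n A B = (\<lambda>a b. \<Sum>c\<in>{1..n}. A a c * B c b)"

text \<open>phi^mu: the representation of S_p (p = |mu|) in Young's orthogonal basis, i.e. the
  homomorphism (matrices indexed by 1..d_mu) determined by its values on the adjacent
  transpositions, which generate S_p.\<close>
definition yrep :: "nat list \<Rightarrow> (nat \<Rightarrow> nat) \<Rightarrow> nat \<Rightarrow> nat \<Rightarrow> complex" where
  "yrep \<mu> = (SOME \<phi>.
      (\<forall>\<sigma> \<tau>. \<sigma> permutes {1..sum_list \<mu>} \<longrightarrow> \<tau> permutes {1..sum_list \<mu>} \<longrightarrow>
         (\<forall>a\<in>{1..dim \<mu>}. \<forall>b\<in>{1..dim \<mu>}. \<phi> (\<sigma> \<circ> \<tau>) a b = matmul (dim \<mu>) (\<phi> \<sigma>) (\<phi> \<tau>) a b))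
    \<and> (\<forall>k\<in>{1..<sum_list \<mu>}. \<forall>a\<in>{1..dim \<mu>}. \<forall>b\<in>{1..dim \<mu>}.
         \<phi> (Transposition.transpose k (Suc k)) a b = young_gen \<mu> k a b))"

definition Eunit :: "nat list \<Rightarrow> nat \<Rightarrow> nat \<Rightarrow> op" where
  "Eunit \<mu> i j = (\<lambda>ys xs. (of_nat (dim \<mu>) / of_nat (fact (sum_list \<mu>))) *
      (\<Sum>\<sigma>\<in>{\<sigma>. \<sigma> permutes {1..sum_list \<mu>}}. yrep \<mu> (inv \<sigma>) j i * Vperm (sum_list \<mu>) \<sigma> ys xs))"

end

theory Submission
  imports Defs
begin

section \<open>Presentation of the symmetric group by adjacent transpositions\<close>

abbreviation (input) sk :: "nat \<Rightarrow> nat \<Rightarrow> nat" where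
  "sk k \<equiv> Transposition.transpose k (Suc k)"

function pc :: "nat \<Rightarrow> nat \<Rightarrow> nat \<Rightarrow> nat" where
  "pc j m = (if j < m then sk j \<circ> pc (Suc j) m else id)"
  by auto
termination by (relation "measure (\<lambda>(j,m). m - j)") auto

function rc :: "nat \<Rightarrow> nat \<Rightarrow> nat \<Rightarrow> nat" where
  "rc j m = (if j < m then rc (Suc j) m \<circ> sk j else id)"
  by auto
termination by (relation "measure (\<lambda>(j,m). m - j)") auto

declare pc.simps[simp del] rc.simps[simp del]

lemma rc_apply: "rc j m x = (if j \<le> m then (if x < j \<or> m < x then x else if x = j then m else x - 1) else x)"
proof (induction j m arbitrary: x rule: rc.induct)
  case (1 j m)
  show ?case
  proof (cases "j < m")
    case True
    then show ?thesis using 1[OF True, of "sk j x"]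
      by (subst rc.simps) (auto simp: Transposition.transpose_def)
  next
    case False
    then show ?thesis by (subst rc.simps) auto
  qed
qed

lemma pc_apply: "pc j m x = (if j \<le> m then (if x < j \<or> m < x then x else if x = m then j else x + 1) else x)"
proof (induction j m arbitrary: x rule: pc.induct)
  case (1 j m)
  show ?case
  proof (cases "j < m")
    case True
    then show ?thesis using 1[OF True, of x]
      by (subst pc.simps) (auto simp: Transposition.transpose_def)
  next
    case False
    then show ?thesis by (subst pc.simps) auto
  qed
qed

lemma rc_pc: "rc j m \<circ> pc j m = id"
  by (auto simp: fun_eq_iff rc_apply pc_apply)

lemma pc_rc: "pc j m \<circ> rc j m = id"
  by (auto simp: fun_eq_iff rc_apply pc_apply)

lemma rc_permutes: "1 \<le> j \<Longrightarrow> rc j m permutes {1..m}"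
  unfolding permutes_def
proof (intro conjI allI)
  fix y show "\<exists>!x. rc j m x = y"
    by (rule ex1I[of _ "pc j m y"]) (auto simp: rc_apply pc_apply split: if_splits)
qed (auto simp: rc_apply)

lemma permutes_fix_last:
  assumes "s permutes {1..Suc m}" "s (Suc m) = Suc m"
  shows "s permutes {1..m}"
  using assms unfolding permutes_def by (metis atLeastAtMost_iff le_SucE)

lemma tr_tr_comp [simp]: "Transposition.transpose a b \<circ> (Transposition.transpose a b \<circ> f) = f"
  by (simp add: fun_eq_iff)

locale coxrep =
  fixes mul :: "'a \<Rightarrow> 'a \<Rightarrow> 'a" (infixl "\<cdot>" 70)
    and one :: 'a and C :: "'a set" and g :: "nat \<Rightarrow> 'a" and n :: nat
  assumes assoc: "(a \<cdot> b) \<cdot> c = a \<cdot> (b \<cdot> c)"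
    and one_C: "one \<in> C" and mul_C: "a \<in> C \<Longrightarrow> b \<in> C \<Longrightarrow> a \<cdot> b \<in> C"
    and g_C: "g k \<in> C"
    and lone: "a \<in> C \<Longrightarrow> one \<cdot> a = a" and rone: "a \<in> C \<Longrightarrow> a \<cdot> one = a"
    and gg: "1 \<le> k \<Longrightarrow> k < n \<Longrightarrow> g k \<cdot> g k = one"
    and braid: "1 \<le> k \<Longrightarrow> Suc k < n \<Longrightarrow> g k \<cdot> g (Suc k) \<cdot> g k = g (Suc k) \<cdot> g k \<cdot> g (Suc k)"
    and comm: "1 \<le> i \<Longrightarrow> Suc (Suc i) \<le> j \<Longrightarrow> j < n \<Longrightarrow> g i \<cdot> g j = g j \<cdot> g i"
begin

function cyc :: "nat \<Rightarrow> nat \<Rightarrow> 'a" where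
  "cyc j m = (if j < m then g j \<cdot> cyc (Suc j) m else one)"
  by auto
termination by (relation "measure (\<lambda>(j,m). m - j)") auto

declare cyc.simps[simp del]

lemma cyc_C: "cyc j m \<in> C"
  by (induction j m rule: cyc.induct) (subst cyc.simps, auto intro: mul_C g_C one_C)

fun phi :: "nat \<Rightarrow> (nat \<Rightarrow> nat) \<Rightarrow> 'a" where
  "phi 0 s = one"
| "phi (Suc m) s = cyc (s (Suc m)) (Suc m) \<cdot> phi m (rc (s (Suc m)) (Suc m) \<circ> s)"

lemma phi_C: "phi m s \<in> C"
  by (induction m arbitrary: s) (auto intro: mul_C cyc_C one_C)

lemma cyc_comm_low: "Suc k < j \<Longrightarrow> 1 \<le> k \<Longrightarrow> m \<le> n \<Longrightarrow> cyc j m \<cdot> g k = g k \<cdot> cyc j m"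
proof (induction j m rule: cyc.induct)
  case (1 j m)
  show ?case
  proof (cases "j < m")
    case True
    have "cyc j m \<cdot> g k = g j \<cdot> (cyc (Suc j) m \<cdot> g k)"
      using True by (subst cyc.simps) (simp add: assoc)
    also have "\<dots> = g j \<cdot> (g k \<cdot> cyc (Suc j) m)" using 1 True by simp
    also have "\<dots> = (g j \<cdot> g k) \<cdot> cyc (Suc j) m" by (simp add: assoc)
    also have "g j \<cdot> g k = g k \<cdot> g j" using 1 True by (intro comm[symmetric]) auto
    finally show ?thesis using True by (subst (2) cyc.simps) (simp add: assoc)
  next
    case False
    then show ?thesis by (subst (1 2) cyc.simps) (simp add: lone rone g_C)
  qed
qed

lemma cyc_shift: "j < k \<Longrightarrow> k < m \<Longrightarrow> m \<le> n \<Longrightarrow> 1 \<le> j \<Longrightarrow> g k \<cdot> cyc j m = cyc j m \<cdot> g (k - 1)"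
proof (induction j m rule: cyc.induct)
  case (1 j m)
  have jm: "j < m" using 1 by simp
  show ?case
  proof (cases "Suc j < k")
    case True
    have "g k \<cdot> cyc j m = (g k \<cdot> g j) \<cdot> cyc (Suc j) m"
      using jm by (subst cyc.simps) (simp add: assoc)
    also have "g k \<cdot> g j = g j \<cdot> g k" using 1 True by (intro comm[symmetric]) auto
    also have "(g j \<cdot> g k) \<cdot> cyc (Suc j) m = g j \<cdot> (g k \<cdot> cyc (Suc j) m)" by (simp add: assoc)
    also have "g k \<cdot> cyc (Suc j) m = cyc (Suc j) m \<cdot> g (k - 1)" using 1 True jm by simp
    finally show ?thesis using jm by (subst (2) cyc.simps) (simp add: assoc)
  next
    case False
    hence k: "k = Suc j" using 1 by simp
    have c1: "cyc j m = g j \<cdot> (g (Suc j) \<cdot> cyc (Suc (Suc j)) m)"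
      using 1 k by (subst cyc.simps, simp, subst cyc.simps, simp)
    have cc: "cyc (Suc (Suc j)) m \<cdot> g j = g j \<cdot> cyc (Suc (Suc j)) m"
      using 1 by (intro cyc_comm_low) auto
    have "g k \<cdot> cyc j m = (g (Suc j) \<cdot> g j \<cdot> g (Suc j)) \<cdot> cyc (Suc (Suc j)) m"
      using c1 k by (simp add: assoc)
    also have "g (Suc j) \<cdot> g j \<cdot> g (Suc j) = g j \<cdot> g (Suc j) \<cdot> g j"
      using 1 k by (intro braid[symmetric]) auto
    also have "g j \<cdot> g (Suc j) \<cdot> g j \<cdot> cyc (Suc (Suc j)) m = g j \<cdot> g (Suc j) \<cdot> (cyc (Suc (Suc j)) m \<cdot> g j)"
      using cc by (simp add: assoc)
    also have "\<dots> = cyc j m \<cdot> g (k - 1)" using c1 k by (simp add: assoc)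
    finally show ?thesis .
  qed
qed

lemma rc_sk_low: "Suc k < j \<Longrightarrow> rc j m \<circ> sk k = sk k \<circ> rc j m"
  by (auto simp: fun_eq_iff rc_apply Transposition.transpose_def)

lemma rc_sk_high: "j < k \<Longrightarrow> k < m \<Longrightarrow> rc j m \<circ> sk k = sk (k - 1) \<circ> rc j m"
  by (auto simp: fun_eq_iff rc_apply Transposition.transpose_def)

lemma rc_step: "j < m \<Longrightarrow> rc j m = rc (Suc j) m \<circ> sk j"
  by (subst rc.simps) simp

lemma cyc_step: "j < m \<Longrightarrow> cyc j m = g j \<cdot> cyc (Suc j) m"
  by (subst cyc.simps) simp

lemma phi_left:
  assumes "m \<le> n" "s permutes {1..m}" "1 \<le> k" "k < m"
  shows "phi m (sk k \<circ> s) = g k \<cdot> phi m s"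
  using assms
proof (induction m arbitrary: s k)
  case 0 then show ?case by simp
next
  case (Suc m)
  define j where "j = s (Suc m)"
  have j: "1 \<le> j" "j \<le> Suc m" proof -
    have "s (Suc m) \<in> {1..Suc m}" using permutes_in_image[OF \<open>s permutes {1..Suc m}\<close>, of "Suc m"] by simp
    then show "1 \<le> j" "j \<le> Suc m" by (auto simp: j_def)
  qed
  define s' where "s' = rc j (Suc m) \<circ> s"
  have s'p: "s' permutes {1..m}"
    unfolding s'_def
    by (rule permutes_fix_last, rule permutes_compose[OF Suc.prems(2) rc_permutes[OF j(1)]])
       (use j in \<open>simp add: j_def rc_apply\<close>)
  have ph: "phi (Suc m) s = cyc j (Suc m) \<cdot> phi m s'" by (simp add: j_def s'_def)
  have s_eq: "s = pc j (Suc m) \<circ> s'"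
    by (simp add: s'_def o_assoc pc_rc)
  consider "Suc k < j" | "Suc k = j" | "k = j" | "j < k" by linarith
  then show ?case
  proof cases
    case 1
    have sj: "(sk k \<circ> s) (Suc m) = j" using 1 by (simp add: j_def Transposition.transpose_def)
    have "phi (Suc m) (sk k \<circ> s) = cyc j (Suc m) \<cdot> phi m (sk k \<circ> s')"
      using sj by (simp add: s'_def o_assoc rc_sk_low[OF 1])
    also have "phi m (sk k \<circ> s') = g k \<cdot> phi m s'"
      using Suc 1 j s'p by (intro Suc.IH) auto
    also have "cyc j (Suc m) \<cdot> (g k \<cdot> phi m s') = g k \<cdot> (cyc j (Suc m) \<cdot> phi m s')"
      using cyc_comm_low[of k j "Suc m"] 1 Suc.prems by (simp add: assoc[symmetric])
    finally show ?thesis using ph by simp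
  next
    case 2
    have sj: "(sk k \<circ> s) (Suc m) = k" using 2 by (simp add: j_def Transposition.transpose_def)
    have "rc k (Suc m) \<circ> (sk k \<circ> s) = s'"
      using 2 j by (simp add: rc_step s'_def comp_assoc)
    hence "phi (Suc m) (sk k \<circ> s) = cyc k (Suc m) \<cdot> phi m s'" using sj by simp
    also have "cyc k (Suc m) = g k \<cdot> cyc j (Suc m)" using 2 j by (simp add: cyc_step)
    finally show ?thesis using ph by (simp add: assoc)
  next
    case 3
    have jm: "j < Suc m" using 3 Suc.prems by simp
    have sj: "(sk k \<circ> s) (Suc m) = Suc j" using 3 by (simp add: j_def Transposition.transpose_def)
    have "rc (Suc j) (Suc m) \<circ> (sk k \<circ> s) = s'"
      using 3 jm by (simp add: rc_step s'_def comp_assoc)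
    hence "phi (Suc m) (sk k \<circ> s) = cyc (Suc j) (Suc m) \<cdot> phi m s'" using sj by simp
    moreover have "g k \<cdot> phi (Suc m) s = cyc (Suc j) (Suc m) \<cdot> phi m s'"
      using ph 3 jm Suc.prems
      by (simp add: cyc_step assoc[symmetric] gg lone cyc_C)
    ultimately show ?thesis by (simp only:)
  next
    case 4
    have sj: "(sk k \<circ> s) (Suc m) = j" using 4 by (simp add: j_def Transposition.transpose_def)
    have "rc j (Suc m) \<circ> (sk k \<circ> s) = sk (k - 1) \<circ> s'"
      using 4 Suc.prems by (simp add: s'_def o_assoc rc_sk_high)
    hence "phi (Suc m) (sk k \<circ> s) = cyc j (Suc m) \<cdot> phi m (sk (k-1) \<circ> s')"
      using sj by simp
    also have "phi m (sk (k-1) \<circ> s') = g (k-1) \<cdot> phi m s'"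
      using Suc 4 j s'p by (intro Suc.IH) auto
    also have "cyc j (Suc m) \<cdot> (g (k-1) \<cdot> phi m s') = g k \<cdot> (cyc j (Suc m) \<cdot> phi m s')"
      using cyc_shift[of j k "Suc m"] 4 j Suc.prems by (simp add: assoc[symmetric])
    finally show ?thesis using ph by simp
  qed
qed

lemma phi_id: "phi m id = one"
proof (induction m)
  case (Suc m)
  have "rc (Suc m) (Suc m) = id" by (simp add: rc.simps)
  moreover have "cyc (Suc m) (Suc m) = one" by (simp add: cyc.simps)
  ultimately show ?case using Suc by (simp add: lone one_C)
qed simp

lemma phi_gen: "m \<le> n \<Longrightarrow> 1 \<le> k \<Longrightarrow> k < m \<Longrightarrow> phi m (sk k) = g k"
  using phi_left[of m id k] by (simp add: phi_id rone g_C)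

fun gprod :: "nat list \<Rightarrow> 'a" where
  "gprod [] = one" | "gprod (x # xs) = g x \<cdot> gprod xs"

lemma phi_adj:
  assumes "m \<le> n" "\<forall>x\<in>set xs. 1 \<le> x \<and> x < m" "t permutes {1..m}"
  shows "phi m (apply_adj_transps xs \<circ> t) = gprod xs \<cdot> phi m t"
  using assms
proof (induction xs)
  case Nil then show ?case by (simp add: lone phi_C)
next
  case (Cons x xs)
  have tp: "apply_adj_transps xs \<circ> t permutes {1..m}"
    using Cons.prems by (intro permutes_compose permutes_apply_adj_transps) auto
  have "phi m (apply_adj_transps (x # xs) \<circ> t) = phi m (sk x \<circ> (apply_adj_transps xs \<circ> t))"
    by (simp add: o_assoc)
  also have "\<dots> = g x \<cdot> phi m (apply_adj_transps xs \<circ> t)"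
    using Cons.prems tp by (intro phi_left) auto
  also have "\<dots> = g x \<cdot> (gprod xs \<cdot> phi m t)" using Cons.IH Cons.prems by (simp add: o_def)
  finally show ?case by (simp only: gprod.simps assoc)
qed

lemma phi_hom:
  assumes "m \<le> n" "s permutes {1..m}" "t permutes {1..m}"
  shows "phi m (s \<circ> t) = phi m s \<cdot> phi m t"
  using assms(2) finite_atLeastAtMost assms(3)
proof (induction s arbitrary: t rule: permutes_induct)
  case id then show ?case by (metis phi_id lone phi_C id_comp)
next
  case (swap a b p)
  define a' b' where "a' = min a b" and "b' = max a b"
  have ab: "a' < b'" "1 \<le> a'" "b' \<le> m" using swap by (auto simp: a'_def b'_def)
  have tr: "Transposition.transpose a b = apply_adj_transps (adj_transp_seq a' b')"
    using ab by (simp add: adj_transp_seq_correct a'_def b'_def transpose_commute min_def max_def)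
  have xs: "\<forall>x\<in>set (adj_transp_seq a' b'). 1 \<le> x \<and> x < m"
    using ab by (simp add: set_adj_transp_seq)
  have pt: "p \<circ> t permutes {1..m}" using swap by (intro permutes_compose)
  have "phi m (Transposition.transpose a b \<circ> p \<circ> t) = gprod (adj_transp_seq a' b') \<cdot> phi m (p \<circ> t)"
    using phi_adj[OF assms(1) xs pt] tr by (simp add: o_assoc)
  also have "\<dots> = gprod (adj_transp_seq a' b') \<cdot> phi m p \<cdot> phi m t"
    using swap by (simp add: assoc o_def)
  also have "gprod (adj_transp_seq a' b') \<cdot> phi m p = phi m (Transposition.transpose a b \<circ> p)"
    using phi_adj[OF assms(1) xs \<open>p permutes {1..m}\<close>] tr by simp
  finally show ?case .
qed

end

lemma coxeter_presentation:
  assumes "coxrep mul one C g n"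
  shows "\<exists>\<phi>. (\<forall>s t. s permutes {1..n} \<longrightarrow> t permutes {1..n} \<longrightarrow> \<phi> (s \<circ> t) = mul (\<phi> s) (\<phi> t))
            \<and> (\<forall>k. 1 \<le> k \<longrightarrow> k < n \<longrightarrow> \<phi> (sk k) = g k)"
  using coxrep.phi_hom[OF assms] coxrep.phi_gen[OF assms] by blast

section \<open>Young diagrams and standard tableaux, generic carrier\<close>

type_synonym cell = "nat \<times> nat"

definition dclosed :: "cell set \<Rightarrow> bool" where
  "dclosed D \<longleftrightarrow> (\<forall>r c r' c'. (r, c) \<in> D \<longrightarrow> r' \<le> r \<longrightarrow> c' \<le> c \<longrightarrow> (r', c') \<in> D)"

definition bfill :: "cell set \<Rightarrow> (cell \<Rightarrow> nat) \<Rightarrow> bool" where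
  "bfill D T \<longleftrightarrow> bij_betw T D {1..card D} \<and> (\<forall>x. x \<notin> D \<longrightarrow> T x = 0)"

definition isyt :: "cell set \<Rightarrow> (cell \<Rightarrow> nat) \<Rightarrow> bool" where
  "isyt D T \<longleftrightarrow> bfill D T
      \<and> (\<forall>r c. (r, Suc c) \<in> D \<longrightarrow> T (r, c) < T (r, Suc c))
      \<and> (\<forall>r c. (Suc r, c) \<in> D \<longrightarrow> T (r, c) < T (Suc r, c))"

definition pos :: "cell set \<Rightarrow> (cell \<Rightarrow> nat) \<Rightarrow> nat \<Rightarrow> cell" where
  "pos D T k = (THE x. x \<in> D \<and> T x = k)"

definition cont :: "cell set \<Rightarrow> (cell \<Rightarrow> nat) \<Rightarrow> nat \<Rightarrow> int" where
  "cont D T k = int (snd (pos D T k)) - int (fst (pos D T k))"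

lemma dclosedD: "dclosed D \<Longrightarrow> (r, c) \<in> D \<Longrightarrow> r' \<le> r \<Longrightarrow> c' \<le> c \<Longrightarrow> (r', c') \<in> D"
  unfolding dclosed_def by blast

lemma bfill_pos:
  assumes "bfill D T" "k \<in> {1..card D}"
  shows "pos D T k \<in> D" "T (pos D T k) = k"
proof -
  from assms obtain x where x: "x \<in> D" "T x = k"
    unfolding bfill_def bij_betw_def by (metis imageE)
  have "\<exists>!x. x \<in> D \<and> T x = k"
    using x assms unfolding bfill_def bij_betw_def inj_on_def by blast
  hence "pos D T k \<in> D \<and> T (pos D T k) = k" unfolding pos_def by (rule theI')
  thus "pos D T k \<in> D" "T (pos D T k) = k" by auto
qed

lemma bfill_pos_eq:
  assumes "bfill D T" "x \<in> D"
  shows "pos D T (T x) = x"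
proof -
  have "\<exists>!y. y \<in> D \<and> T y = T x"
    using assms unfolding bfill_def bij_betw_def inj_on_def by blast
  thus ?thesis unfolding pos_def by (rule the1_equality) (simp add: assms(2))
qed

lemma bfill_range: "bfill D T \<Longrightarrow> x \<in> D \<Longrightarrow> T x \<in> {1..card D}"
  unfolding bfill_def bij_betw_def by blast

lemma bfill_zero: "bfill D T \<Longrightarrow> y \<notin> D \<Longrightarrow> T y = 0"
  unfolding bfill_def by blast

lemma bfill_inj: "bfill D T \<Longrightarrow> x \<in> D \<Longrightarrow> y \<in> D \<Longrightarrow> T x = T y \<Longrightarrow> x = y"
  unfolding bfill_def bij_betw_def inj_on_def by blast

lemma isyt_bfill: "isyt D T \<Longrightarrow> bfill D T"
  unfolding isyt_def by simp

lemma isyt_row: "isyt D T \<Longrightarrow> (r, Suc c) \<in> D \<Longrightarrow> T (r, c) < T (r, Suc c)"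
  unfolding isyt_def by blast

lemma isyt_col: "isyt D T \<Longrightarrow> (Suc r, c) \<in> D \<Longrightarrow> T (r, c) < T (Suc r, c)"
  unfolding isyt_def by blast

lemma isytI:
  assumes "bij_betw T D {1..card D}" "\<And>x. x \<notin> D \<Longrightarrow> T x = 0"
    "\<And>r c. (r, Suc c) \<in> D \<Longrightarrow> T (r, c) < T (r, Suc c)"
    "\<And>r c. (Suc r, c) \<in> D \<Longrightarrow> T (r, c) < T (Suc r, c)"
  shows "isyt D T"
  unfolding isyt_def bfill_def using assms by blast

lemma sk_less_mono: "a < b \<Longrightarrow> \<not> (a = k \<and> b = Suc k) \<Longrightarrow> sk k a < sk k b"
  by (auto simp: Transposition.transpose_def)

lemma bfill_sk:
  assumes "bfill D T" "1 \<le> k" "k < card D"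
  shows "bfill D (sk k \<circ> T)"
  unfolding bfill_def
proof
  have "bij_betw (sk k) {1..card D} {1..card D}"
    using assms by (intro permutes_imp_bij permutes_swap_id) auto
  then show "bij_betw (sk k \<circ> T) D {1..card D}"
    using assms(1) unfolding bfill_def by (blast intro: bij_betw_trans)
  show "\<forall>x. x \<notin> D \<longrightarrow> (sk k \<circ> T) x = 0"
    using assms unfolding bfill_def by (auto simp: Transposition.transpose_def)
qed

lemma pos_sk:
  assumes "bfill D T" "1 \<le> k" "k < card D" "j \<in> {1..card D}"
  shows "pos D (sk k \<circ> T) j = pos D T (sk k j)"
proof -
  have sj: "sk k j \<in> {1..card D}" using assms by (auto simp: Transposition.transpose_def)
  have "pos D (sk k \<circ> T) j = pos D (sk k \<circ> T) ((sk k \<circ> T) (pos D T (sk k j)))"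
    using bfill_pos[OF assms(1) sj] by simp
  also have "\<dots> = pos D T (sk k j)"
    by (rule bfill_pos_eq[OF bfill_sk[OF assms(1-3)] bfill_pos(1)[OF assms(1) sj]])
  finally show ?thesis .
qed

lemma cont_sk:
  assumes "bfill D T" "1 \<le> k" "k < card D" "j \<in> {1..card D}"
  shows "cont D (sk k \<circ> T) j = cont D T (sk k j)"
  using pos_sk[OF assms] by (simp add: cont_def)

lemma isyt_mono:
  assumes "isyt D T" "dclosed D" "(r', c') \<in> D" "r \<le> r'" "c \<le> c'" "(r, c) \<noteq> (r', c')"
  shows "T (r, c) < T (r', c')"
  using assms(3-6)
proof (induction "r' + c'" arbitrary: r' c')
  case 0 then show ?case by simp
next
  case (Suc m)
  show ?case
  proof (cases "c < c'")
    case True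
    obtain c0 where c0: "c' = Suc c0" using True by (cases c') auto
    have y: "(r', c0) \<in> D" using dclosedD[OF assms(2) Suc.prems(1), of r' c0] c0 by simp
    have lt: "T (r', c0) < T (r', c')" using assms(1) Suc.prems(1) c0 unfolding isyt_def by simp
    show ?thesis
    proof (cases "(r, c) = (r', c0)")
      case True then show ?thesis using lt by simp
    next
      case False
      have "m = r' + c0" using Suc.hyps(2) c0 by simp
      have "c \<le> c0" using True c0 by simp
      have "T (r, c) < T (r', c0)" 
        by (rule Suc.hyps(1)) (fact+)
      then show ?thesis using lt by simp
    qed
  next
    case False
    hence cc: "c = c'" using Suc.prems by simp
    hence rr: "r < r'" using Suc.prems by auto
    obtain r0 where r0: "r' = Suc r0" using rr by (cases r') auto
    have y: "(r0, c') \<in> D" using dclosedD[OF assms(2) Suc.prems(1), of r0 c'] r0 by simp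
    have lt: "T (r0, c') < T (r', c')" using assms(1) Suc.prems(1) r0 unfolding isyt_def by simp
    show ?thesis
    proof (cases "(r, c) = (r0, c')")
      case True then show ?thesis using lt by simp
    next
      case False
      have "m = r0 + c'" using Suc.hyps(2) r0 by simp
      have "r \<le> r0" using rr r0 by simp
      have "c \<le> c'" using cc by simp
      have "T (r, c) < T (r0, c')" 
        by (rule Suc.hyps(1)) (fact+)
      then show ?thesis using lt by simp
    qed
  qed
qed

lemma isyt_lt:
  assumes "isyt D T" "dclosed D" "y \<in> D" "fst x \<le> fst y" "snd x \<le> snd y" "x \<noteq> y"
  shows "T x < T y"
  using isyt_mono[OF assms(1,2), of "fst y" "snd y" "fst x" "snd x"] assms(3-6) by simp

lemma consec_cases:
  assumes T: "isyt D T" and dc: "dclosed D" and k: "1 \<le> k" "Suc k \<le> card D"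
  defines "x \<equiv> pos D T k" and "y \<equiv> pos D T (Suc k)"
  shows "y = (fst x, Suc (snd x)) \<or> y = (Suc (fst x), snd x)
         \<or> (fst x < fst y \<and> snd y < snd x) \<or> (fst y < fst x \<and> snd x < snd y)"
proof -
  have bf: "bfill D T" using T by (rule isyt_bfill)
  have xD: "x \<in> D" "T x = k" using bfill_pos[OF bf, of k] k by (auto simp: x_def)
  have yD: "y \<in> D" "T y = Suc k" using bfill_pos[OF bf, of "Suc k"] k by (auto simp: y_def)
  have ne: "x \<noteq> y" using xD yD by auto
  have noz: False if "z \<in> D" "fst x \<le> fst z" "snd x \<le> snd z" "fst z \<le> fst y" "snd z \<le> snd y"
      "z \<noteq> x" "z \<noteq> y" for z
  proof -
    have "T x < T z" using isyt_lt[OF T dc that(1)] that by auto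
    moreover have "T z < T y" using isyt_lt[OF T dc yD(1), of z] that by auto
    ultimately show False using xD yD by simp
  qed
  have notle: "\<not> (fst y \<le> fst x \<and> snd y \<le> snd x)"
  proof
    assume "fst y \<le> fst x \<and> snd y \<le> snd x"
    hence "T y < T x" using isyt_lt[OF T dc xD(1), of y] ne by auto
    thus False using xD yD by simp
  qed
  obtain r c where xe: "x = (r, c)" by (cases x)
  obtain r' c' where ye: "y = (r', c')" by (cases y)
  show ?thesis
  proof (cases "r \<le> r' \<and> c \<le> c'")
    case True
    show ?thesis
    proof (cases "r < r' \<and> c < c'")
      case True
      have zD: "(r, c') \<in> D" using dclosedD[OF dc, of r' c' r c'] yD ye True by simp
      show ?thesis using noz[OF zD] xe ye True by simp
    next
      case False
      hence "r = r' \<or> c = c'" using \<open>r \<le> r' \<and> c \<le> c'\<close> by linarith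
      then show ?thesis
      proof
        assume rr: "r = r'"
        hence cc: "c < c'" using ne True xe ye by auto
        show ?thesis
        proof (cases "c' = Suc c")
          case True then show ?thesis using xe ye rr by simp
        next
          case False
          hence "Suc c < c'" using cc by simp
          have zD: "(r, Suc c) \<in> D" using dclosedD[OF dc, of r' c' r "Suc c"] yD ye rr cc by simp
          show ?thesis using noz[OF zD] xe ye rr \<open>Suc c < c'\<close> by simp
        qed
      next
        assume cc: "c = c'"
        hence rr: "r < r'" using ne True xe ye by auto
        show ?thesis
        proof (cases "r' = Suc r")
          case True then show ?thesis using xe ye cc by simp
        next
          case False
          hence "Suc r < r'" using rr by simp
          have zD: "(Suc r, c) \<in> D" using dclosedD[OF dc, of r' c' "Suc r" c] yD ye cc rr by simp
          show ?thesis using noz[OF zD] xe ye cc \<open>Suc r < r'\<close> by simp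
        qed
      qed
    qed
  next
    case False
    then show ?thesis using notle xe ye by auto
  qed
qed

definition rho :: "cell set \<Rightarrow> (cell \<Rightarrow> nat) \<Rightarrow> nat \<Rightarrow> int" where
  "rho D T k = cont D T (Suc k) - cont D T k"

definition adjc :: "cell \<Rightarrow> cell \<Rightarrow> bool" where
  "adjc x y \<longleftrightarrow> y = (fst x, Suc (snd x)) \<or> y = (Suc (fst x), snd x)"

lemma rho_adj:
  assumes "isyt D T" "dclosed D" "1 \<le> k" "Suc k \<le> card D"
    "adjc (pos D T k) (pos D T (Suc k))"
  shows "\<bar>rho D T k\<bar> = 1"
  using assms(5) unfolding adjc_def rho_def cont_def by auto

lemma rho_nonadj:
  assumes "isyt D T" "dclosed D" "1 \<le> k" "Suc k \<le> card D"
    "\<not> adjc (pos D T k) (pos D T (Suc k))"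
  shows "\<bar>rho D T k\<bar> \<ge> 2"
  using consec_cases[OF assms(1-4)] assms(5) unfolding adjc_def rho_def cont_def by auto

lemma rho_nz:
  assumes "isyt D T" "dclosed D" "1 \<le> k" "Suc k \<le> card D"
  shows "rho D T k \<noteq> 0"
  using rho_adj[OF assms] rho_nonadj[OF assms] by fastforce

lemma isyt_sk_iff:
  assumes T: "isyt D T" and dc: "dclosed D" and k: "1 \<le> k" "Suc k \<le> card D"
  shows "isyt D (sk k \<circ> T) \<longleftrightarrow> \<not> adjc (pos D T k) (pos D T (Suc k))"
proof -
  have bf: "bfill D T" using T by (rule isyt_bfill)
  have xD: "pos D T k \<in> D" "T (pos D T k) = k" using bfill_pos[OF bf, of k] k by auto
  have yD: "pos D T (Suc k) \<in> D" "T (pos D T (Suc k)) = Suc k" using bfill_pos[OF bf, of "Suc k"] k by auto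
  have bf': "bfill D (sk k \<circ> T)" using bfill_sk[OF bf] k by simp
  show ?thesis
  proof
    assume st: "isyt D (sk k \<circ> T)"
    show "\<not> adjc (pos D T k) (pos D T (Suc k))"
    proof
      assume "adjc (pos D T k) (pos D T (Suc k))"
      then consider "pos D T (Suc k) = (fst (pos D T k), Suc (snd (pos D T k)))"
        | "pos D T (Suc k) = (Suc (fst (pos D T k)), snd (pos D T k))" unfolding adjc_def by blast
      then show False
      proof cases
        case 1
        have "(sk k \<circ> T) (fst (pos D T k), snd (pos D T k)) < (sk k \<circ> T) (fst (pos D T k), Suc (snd (pos D T k)))"
          using st yD 1 unfolding isyt_def by (metis (no_types, lifting))
        then show False using xD yD 1 by simp
      next
        case 2
        have "(sk k \<circ> T) (fst (pos D T k), snd (pos D T k)) < (sk k \<circ> T) (Suc (fst (pos D T k)), snd (pos D T k))"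
          using st yD 2 unfolding isyt_def by (metis (no_types, lifting))
        then show False using xD yD 2 by simp
      qed
    qed
  next
    assume na: "\<not> adjc (pos D T k) (pos D T (Suc k))"
    have row: "(sk k \<circ> T) (r, c) < (sk k \<circ> T) (r, Suc c)" if "(r, Suc c) \<in> D" for r c
    proof -
      have lt: "T (r, c) < T (r, Suc c)" using T that unfolding isyt_def by blast
      have rc: "(r, c) \<in> D" using dclosedD[OF dc that, of r c] by simp
      have "\<not> (T (r, c) = k \<and> T (r, Suc c) = Suc k)"
      proof
        assume h: "T (r, c) = k \<and> T (r, Suc c) = Suc k"
        hence "pos D T k = (r, c)" "pos D T (Suc k) = (r, Suc c)"
          using bfill_pos_eq[OF bf rc] bfill_pos_eq[OF bf that] by auto
        thus False using na unfolding adjc_def by simp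
      qed
      thus ?thesis using sk_less_mono[OF lt] by simp
    qed
    have col: "(sk k \<circ> T) (r, c) < (sk k \<circ> T) (Suc r, c)" if "(Suc r, c) \<in> D" for r c
    proof -
      have lt: "T (r, c) < T (Suc r, c)" using T that unfolding isyt_def by blast
      have rc: "(r, c) \<in> D" using dclosedD[OF dc that, of r c] by simp
      have "\<not> (T (r, c) = k \<and> T (Suc r, c) = Suc k)"
      proof
        assume h: "T (r, c) = k \<and> T (Suc r, c) = Suc k"
        hence "pos D T k = (r, c)" "pos D T (Suc k) = (Suc r, c)"
          using bfill_pos_eq[OF bf rc] bfill_pos_eq[OF bf that] by auto
        thus False using na unfolding adjc_def by simp
      qed
      thus ?thesis using sk_less_mono[OF lt] by simp
    qed
    show "isyt D (sk k \<circ> T)" unfolding isyt_def using bf' row col by blast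
  qed
qed

lemma rho_sk:
  assumes "bfill D T" "1 \<le> k" "Suc k \<le> card D"
  shows "rho D (sk k \<circ> T) k = - rho D T k"
  using cont_sk[OF assms(1,2), of k] cont_sk[OF assms(1,2), of "Suc k"] assms
  by (simp add: rho_def)

lemma cont_distinct2:
  assumes T: "isyt D T" and dc: "dclosed D" and k: "1 \<le> k" "Suc (Suc k) \<le> card D"
  shows "cont D T k \<noteq> cont D T (Suc (Suc k))"
proof
  assume eq: "cont D T k = cont D T (Suc (Suc k))"
  have bf: "bfill D T" using T by (rule isyt_bfill)
  define x where "x = pos D T k"
  define z where "z = pos D T (Suc (Suc k))"
  have xD: "x \<in> D" "T x = k" using bfill_pos[OF bf, of k] k by (auto simp: x_def)
  have zD: "z \<in> D" "T z = Suc (Suc k)" using bfill_pos[OF bf, of "Suc (Suc k)"] k by (auto simp: z_def)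
  obtain r c where xe: "x = (r, c)" by (cases x)
  obtain r' c' where ze: "z = (r', c')" by (cases z)
  have ceq: "int c - int r = int c' - int r'" using eq xe ze by (simp add: cont_def x_def z_def)
  have ne: "x \<noteq> z" using xD zD by auto
  consider "r < r' \<and> c < c'" | "r' < r \<and> c' < c" using ceq ne xe ze by (cases "r < r'"; cases "r' < r") auto
  then show False
  proof cases
    case 1
    have a: "(r, Suc c) \<in> D" using dclosedD[OF dc, of r' c' r "Suc c"] zD ze 1 by simp
    have b: "(Suc r, c) \<in> D" using dclosedD[OF dc, of r' c' "Suc r" c] zD ze 1 by simp
    have "T x < T (r, Suc c)" using isyt_lt[OF T dc a, of x] xe by simp
    moreover have "T (r, Suc c) < T z" using isyt_lt[OF T dc zD(1), of "(r, Suc c)"] ze 1 by auto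
    moreover have "T x < T (Suc r, c)" using isyt_lt[OF T dc b, of x] xe by simp
    moreover have "T (Suc r, c) < T z" using isyt_lt[OF T dc zD(1), of "(Suc r, c)"] ze 1 by auto
    ultimately have "T (r, Suc c) = T (Suc r, c)" using xD zD by simp
    hence "(r, Suc c) = (Suc r, c)" using bfill_inj[OF bf a b] by simp
    thus False by simp
  next
    case 2
    have "T z < T x" using isyt_lt[OF T dc xD(1), of z] xe ze 2 by auto
    thus False using xD zD by simp
  qed
qed

lemma cont_distinct1:
  assumes "isyt D T" "dclosed D" "1 \<le> k" "Suc k \<le> card D"
  shows "cont D T k \<noteq> cont D T (Suc k)"
  using rho_nz[OF assms] by (simp add: rho_def)

lemma isyt_first:
  assumes T: "isyt D T" and dc: "dclosed D" and n: "1 \<le> card D"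
  shows "pos D T 1 = (0, 0)"
proof -
  have bf: "bfill D T" using T by (rule isyt_bfill)
  have xD: "pos D T 1 \<in> D" "T (pos D T 1) = 1" using bfill_pos[OF bf, of 1] n by auto
  have oD: "(0, 0) \<in> D" using dclosedD[OF dc, of "fst (pos D T 1)" "snd (pos D T 1)" 0 0] xD by simp
  show ?thesis
  proof (rule ccontr)
    assume "pos D T 1 \<noteq> (0, 0)"
    hence "T (0, 0) < T (pos D T 1)" using isyt_lt[OF T dc xD(1), of "(0,0)"] by auto
    moreover have "T (0, 0) \<ge> 1" using bfill_range[OF bf oD] by simp
    ultimately show False using xD by simp
  qed
qed

lemma cont_first: "isyt D T \<Longrightarrow> dclosed D \<Longrightarrow> 1 \<le> card D \<Longrightarrow> cont D T 1 = 0"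
  using isyt_first by (simp add: cont_def)

lemma bfill_image: "bfill D T \<Longrightarrow> D = pos D T ` {1..card D}"
proof
  assume bf: "bfill D T"
  show "D \<subseteq> pos D T ` {1..card D}"
  proof
    fix x assume "x \<in> D"
    thus "x \<in> pos D T ` {1..card D}" using bfill_pos_eq[OF bf] bfill_range[OF bf] by (metis imageI)
  qed
  show "pos D T ` {1..card D} \<subseteq> D" using bfill_pos(1)[OF bf] by auto
qed

lemma cont_inj_aux:
  assumes T: "isyt D T" and T': "isyt D' T'" and dc: "dclosed D" and dc': "dclosed D'"
    and n: "card D' = card D" and k: "k \<in> {1..card D}"
    and IH: "\<forall>j\<in>{1..<k}. pos D T j = pos D' T' j"
    and lt: "fst (pos D T k) < fst (pos D' T' k)" "snd (pos D T k) < snd (pos D' T' k)"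
  shows False
proof -
  have bf: "bfill D T" using T by (rule isyt_bfill)
  have bf': "bfill D' T'" using T' by (rule isyt_bfill)
  define x where "x = pos D T k"
  define x' where "x' = pos D' T' k"
  have xD: "x \<in> D" "T x = k" using bfill_pos[OF bf k] by (auto simp: x_def)
  have xD': "x' \<in> D'" "T' x' = k" using bfill_pos[OF bf'] k n by (auto simp: x'_def)
  obtain r' c' where xe': "x' = (r', c')" by (cases x')
  obtain r0 where r0: "r' = Suc r0" using lt xe' x'_def by (cases r') auto
  define w where "w = (r0, c')"
  have wD': "w \<in> D'" using dclosedD[OF dc', of r' c' r0 c'] xD' xe' r0 by (simp add: w_def)
  have "T' w < T' x'" using isyt_lt[OF T' dc' xD'(1), of w] xe' r0 by (auto simp: w_def)
  moreover have "T' w \<ge> 1" using bfill_range[OF bf' wD'] by simp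
  ultimately have j: "T' w \<in> {1..<k}" using xD' by simp
  have "pos D T (T' w) = w" using IH j bfill_pos_eq[OF bf' wD'] by simp
  hence wD: "w \<in> D" "T w = T' w" using bfill_pos[OF bf, of "T' w"] j k by auto
  have "fst x \<le> fst w" "snd x \<le> snd w" "x \<noteq> w"
    using lt xe' r0 unfolding w_def x_def x'_def by auto
  hence "T x < T w" using isyt_lt[OF T dc wD(1), of x] by simp
  thus False using xD wD j by simp
qed

lemma same_diag:
  assumes "int (snd x) - int (fst x) = int (snd y) - int (fst y)" "x \<noteq> y"
  shows "(fst x < fst y \<and> snd x < snd y) \<or> (fst y < fst x \<and> snd y < snd x)"
  using assms by (cases x; cases y) auto

lemma cont_inj:
  assumes T: "isyt D T" and T': "isyt D' T'" and dc: "dclosed D" and dc': "dclosed D'"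
    and n: "card D' = card D"
    and eq: "\<forall>k\<in>{1..card D}. cont D T k = cont D' T' k"
  shows "D = D' \<and> T = T'"
proof -
  have bf: "bfill D T" using T by (rule isyt_bfill)
  have bf': "bfill D' T'" using T' by (rule isyt_bfill)
  have P: "\<forall>j\<in>{1..<k}. pos D T j = pos D' T' j" if "k \<le> Suc (card D)" for k
    using that
  proof (induction k)
    case 0 then show ?case by simp
  next
    case (Suc k)
    have IH: "\<forall>j\<in>{1..<k}. pos D T j = pos D' T' j" using Suc by simp
    show ?case
    proof (cases "k = 0")
      case True then show ?thesis by simp
    next
      case False
      hence kk: "k \<in> {1..card D}" using Suc.prems by simp
      have "pos D T k = pos D' T' k"
      proof (rule ccontr)
        assume ne: "pos D T k \<noteq> pos D' T' k"
        have "int (snd (pos D T k)) - int (fst (pos D T k)) = int (snd (pos D' T' k)) - int (fst (pos D' T' k))"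
          using eq kk by (simp add: cont_def)
        from same_diag[OF this ne] show False
        proof
          assume "fst (pos D T k) < fst (pos D' T' k) \<and> snd (pos D T k) < snd (pos D' T' k)"
          thus False using cont_inj_aux[OF T T' dc dc' n kk IH] by simp
        next
          assume "fst (pos D' T' k) < fst (pos D T k) \<and> snd (pos D' T' k) < snd (pos D T k)"
          moreover have "\<forall>j\<in>{1..<k}. pos D' T' j = pos D T j" using IH by simp
          moreover have "k \<in> {1..card D'}" using kk n by simp
          ultimately show False using cont_inj_aux[OF T' T dc' dc n[symmetric]] by blast
        qed
      qed
      then show ?thesis using IH by (auto simp: less_Suc_eq)
    qed
  qed
  have pe: "\<forall>j\<in>{1..card D}. pos D T j = pos D' T' j" using P[of "Suc (card D)"] by auto
  have "D = pos D T ` {1..card D}" by (rule bfill_image[OF bf])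
  also have "\<dots> = pos D' T' ` {1..card D}" using pe by (intro image_cong) auto
  also have "\<dots> = D'" using bfill_image[OF bf'] n by simp
  finally have DD: "D = D'" .
  have "T x = T' x" for x
  proof (cases "x \<in> D")
    case True
    have "pos D' T' (T x) = x" using pe bfill_range[OF bf True] bfill_pos_eq[OF bf True] by simp
    moreover have "T' (pos D' T' (T x)) = T x" using bfill_pos(2)[OF bf'] bfill_range[OF bf True] n by simp
    ultimately show ?thesis by simp
  next
    case False
    have "T x = 0" using bf False unfolding bfill_def by blast
    moreover have "T' x = 0" using bf' False DD unfolding bfill_def by blast
    ultimately show ?thesis by simp
  qed
  thus ?thesis using DD by auto
qed

definition corner :: "cell set \<Rightarrow> cell \<Rightarrow> bool" where
  "corner D x \<longleftrightarrow> x \<in> D \<and> (fst x, Suc (snd x)) \<notin> D \<and> (Suc (fst x), snd x) \<notin> D"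

lemma dclosed_remove:
  assumes dc: "dclosed D" and co: "corner D x"
  shows "dclosed (D - {x})"
  unfolding dclosed_def
proof (intro allI impI)
  fix r c r' c'
  assume h: "(r, c) \<in> D - {x}" "r' \<le> r" "c' \<le> c"
  have inD: "(r', c') \<in> D" using dclosedD[OF dc, of r c r' c'] h by simp
  show "(r', c') \<in> D - {x}"
  proof
    show "(r', c') \<in> D" by (fact inD)
    show "(r', c') \<notin> {x}"
    proof
      assume "(r', c') \<in> {x}"
      hence xe: "x = (r', c')" by simp
      have "(r, c) \<noteq> (r', c')" using h xe by auto
      hence "r' < r \<or> c' < c" using h by auto
      thus False
      proof
        assume "r' < r"
        hence "(Suc r', c') \<in> D" using dclosedD[OF dc, of r c "Suc r'" c'] h by simp
        thus False using co xe by (simp add: corner_def)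
      next
        assume "c' < c"
        hence "(r', Suc c') \<in> D" using dclosedD[OF dc, of r c r' "Suc c'"] h by simp
        thus False using co xe by (simp add: corner_def)
      qed
    qed
  qed
qed

lemma corner_max:
  assumes T: "isyt D T" and x: "x \<in> D" "T x = card D"
  shows "corner D x"
proof -
  have bf: "bfill D T" using T by (rule isyt_bfill)
  have a: "(fst x, Suc (snd x)) \<notin> D"
  proof
    assume h: "(fst x, Suc (snd x)) \<in> D"
    hence "T (fst x, snd x) < T (fst x, Suc (snd x))" by (rule isyt_row[OF T])
    moreover have "T (fst x, Suc (snd x)) \<le> card D" using bfill_range[OF bf h] by simp
    ultimately show False using x by simp
  qed
  have b: "(Suc (fst x), snd x) \<notin> D"
  proof
    assume h: "(Suc (fst x), snd x) \<in> D"
    hence "T (fst x, snd x) < T (Suc (fst x), snd x)" by (rule isyt_col[OF T])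
    moreover have "T (Suc (fst x), snd x) \<le> card D" using bfill_range[OF bf h] by simp
    ultimately show False using x by simp
  qed
  show ?thesis using a b x by (simp add: corner_def)
qed

lemma isyt_remove:
  assumes T: "isyt D T" and dc: "dclosed D" and fin: "finite D" and x: "x \<in> D" "T x = card D"
  shows "isyt (D - {x}) (T(x := 0))"
proof -
  have bf: "bfill D T" using T by (rule isyt_bfill)
  have co: "corner D x" using corner_max[OF T x] .
  have cd: "card (D - {x}) = card D - 1" using fin x by simp
  have "card D > 0" using fin x by (auto simp: card_gt_0_iff)
  hence n1: "card D \<ge> 1" by simp
  have bT: "bij_betw T D {1..card D}" using bf unfolding bfill_def by simp
  have "bij_betw T (D - {x}) ({1..card D} - {card D})"
    by (rule bij_betw_DiffI[OF bT]) (use x n1 in simp_all)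
  moreover have "{1..card D} - {card D} = {1..card (D - {x})}" using cd n1 by auto
  ultimately have b1': "bij_betw T (D - {x}) {1..card (D - {x})}" by simp
  have "bij_betw (T(x := 0)) (D - {x}) {1..card (D - {x})} = bij_betw T (D - {x}) {1..card (D - {x})}"
    by (rule bij_betw_cong) simp
  with b1' have b1: "bij_betw (T(x := 0)) (D - {x}) {1..card (D - {x})}" by simp
  have row: "(T(x := 0)) (r, c) < (T(x := 0)) (r, Suc c)" if "(r, Suc c) \<in> D - {x}" for r c
  proof -
    have "(r, c) \<noteq> x" using co that by (auto simp: corner_def)
    thus ?thesis using that isyt_row[OF T, of r c] by auto
  qed
  have col: "(T(x := 0)) (r, c) < (T(x := 0)) (Suc r, c)" if "(Suc r, c) \<in> D - {x}" for r c
  proof -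
    have "(r, c) \<noteq> x" using co that by (auto simp: corner_def)
    thus ?thesis using that isyt_col[OF T, of r c] by auto
  qed
  show ?thesis
  proof (rule isytI[OF b1])
    fix y assume "y \<notin> D - {x}" thus "(T(x := 0)) y = 0" using bfill_zero[OF bf, of y] by (cases "y = x") auto
  next
    fix r c assume "(r, Suc c) \<in> D - {x}"
    thus "(T(x := 0)) (r, c) < (T(x := 0)) (r, Suc c)" by (rule row)
  next
    fix r c assume "(Suc r, c) \<in> D - {x}"
    thus "(T(x := 0)) (r, c) < (T(x := 0)) (Suc r, c)" by (rule col)
  qed
qed

lemma isyt_add:
  assumes V: "isyt (D - {x}) V" and co: "corner D x" and fin: "finite D" and dc: "dclosed D"
  shows "isyt D (V(x := card D))"
proof -
  have x: "x \<in> D" using co by (simp add: corner_def)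
  have bf: "bfill (D - {x}) V" using V by (rule isyt_bfill)
  have cd: "card (D - {x}) = card D - 1" using fin x by simp
  have "card D > 0" using fin x by (auto simp: card_gt_0_iff)
  hence n1: "card D \<ge> 1" by simp
  have bV: "bij_betw V (D - {x}) {1..card D - 1}" using bf cd unfolding bfill_def by simp
  have "bij_betw (V(x := card D)) (D - {x}) {1..card D - 1} = bij_betw V (D - {x}) {1..card D - 1}"
    by (rule bij_betw_cong) simp
  with bV have b0: "bij_betw (V(x := card D)) (D - {x}) {1..card D - 1}" by simp
  have "bij_betw (V(x := card D)) ((D - {x}) \<union> {x}) ({1..card D - 1} \<union> {(V(x := card D)) x})"
    by (rule notIn_Un_bij_betw[OF _ _ b0]) auto
  moreover have "(D - {x}) \<union> {x} = D" using x by auto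
  moreover have "{1..card D - 1} \<union> {(V(x := card D)) x} = {1..card D}" using n1 by (auto simp: atLeastAtMost_iff)
  ultimately have b1: "bij_betw (V(x := card D)) D {1..card D}" by simp
  have rng: "V y < card D" if "y \<in> D - {x}" for y
  proof -
    have "V y \<in> {1..card (D - {x})}" by (rule bfill_range[OF bf that])
    hence "V y \<le> card D - 1" using cd by simp
    thus ?thesis using n1 by linarith
  qed
  have row: "(V(x := card D)) (r, c) < (V(x := card D)) (r, Suc c)" if h: "(r, Suc c) \<in> D" for r c
  proof (cases "(r, Suc c) = x")
    case True
    have "(r, c) \<in> D" using dclosedD[OF dc h, of r c] by simp
    hence "(r, c) \<in> D - {x}" using True by auto
    hence "V (r, c) < card D" by (rule rng)
    moreover have "(r, c) \<noteq> x" using \<open>(r, c) \<in> D - {x}\<close> by blast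
    ultimately show ?thesis using True by simp
  next
    case False
    have "(r, c) \<noteq> x" using co h by (auto simp: corner_def)
    then show ?thesis using False h isyt_row[OF V, of r c] by auto
  qed
  have col: "(V(x := card D)) (r, c) < (V(x := card D)) (Suc r, c)" if h: "(Suc r, c) \<in> D" for r c
  proof (cases "(Suc r, c) = x")
    case True
    have "(r, c) \<in> D" using dclosedD[OF dc h, of r c] by simp
    hence "(r, c) \<in> D - {x}" using True by auto
    hence "V (r, c) < card D" by (rule rng)
    moreover have "(r, c) \<noteq> x" using \<open>(r, c) \<in> D - {x}\<close> by blast
    ultimately show ?thesis using True by simp
  next
    case False
    have "(r, c) \<noteq> x" using co h by (auto simp: corner_def)
    then show ?thesis using False h isyt_col[OF V, of r c] by auto
  qed
  show ?thesis
  proof (rule isytI[OF b1])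
    fix y assume y: "y \<notin> D" hence "y \<notin> D - {x}" "y \<noteq> x" using x by auto
    thus "(V(x := card D)) y = 0" using bfill_zero[OF bf, of y] by simp
  next
    fix r c assume "(r, Suc c) \<in> D"
    thus "(V(x := card D)) (r, c) < (V(x := card D)) (r, Suc c)" by (rule row)
  next
    fix r c assume "(Suc r, c) \<in> D"
    thus "(V(x := card D)) (r, c) < (V(x := card D)) (Suc r, c)" by (rule col)
  qed
qed

lemma corner_exists:
  assumes "finite D" "D \<noteq> {}"
  shows "\<exists>x. corner D x"
proof -
  define f where "f = (\<lambda>y::cell. fst y + snd y)"
  have fin: "finite (f ` D)" using assms by simp
  have ne: "f ` D \<noteq> {}" using assms by simp
  have "Max (f ` D) \<in> f ` D" using Max_in[OF fin ne] .
  then obtain x where x: "x \<in> D" "f x = Max (f ` D)" by auto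
  have le: "f y \<le> f x" if "y \<in> D" for y using Max_ge[OF fin, of "f y"] that x by simp
  have "(fst x, Suc (snd x)) \<notin> D" using le[of "(fst x, Suc (snd x))"] by (auto simp: f_def)
  moreover have "(Suc (fst x), snd x) \<notin> D" using le[of "(Suc (fst x), snd x)"] by (auto simp: f_def)
  ultimately have "corner D x" using x unfolding corner_def by simp
  thus ?thesis by blast
qed

lemma isyt_exists:
  assumes "finite D" "dclosed D"
  shows "\<exists>T. isyt D T"
  using assms
proof (induction "card D" arbitrary: D)
  case 0
  hence D: "D = {}" by simp
  have "isyt D (\<lambda>_. 0)" unfolding isyt_def bfill_def D by (simp add: bij_betw_def)
  thus ?case by blast
next
  case (Suc m)
  hence "D \<noteq> {}" by auto
  then obtain x where co: "corner D x" using corner_exists Suc by blast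
  have x: "x \<in> D" using co by (simp add: corner_def)
  have "m = card (D - {x})" using Suc x by simp
  moreover have "finite (D - {x})" using Suc by simp
  moreover have "dclosed (D - {x})" using dclosed_remove[OF Suc(4) co] .
  ultimately obtain V where "isyt (D - {x}) V" using Suc.hyps by blast
  from isyt_add[OF this co Suc(3) Suc(4)] show ?case by blast
qed

definition yedge :: "cell set \<Rightarrow> (cell \<Rightarrow> nat) \<Rightarrow> (cell \<Rightarrow> nat) \<Rightarrow> bool" where
  "yedge D T U \<longleftrightarrow> isyt D T \<and> isyt D U \<and> (\<exists>k. 1 \<le> k \<and> Suc k \<le> card D \<and> U = sk k \<circ> T)"

lemma yedge_lift:
  assumes fin: "finite D" and dc: "dclosed D" and co: "corner D x" and e: "yedge (D - {x}) V W"
  shows "yedge D (V(x := card D)) (W(x := card D))"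
proof -
  have x: "x \<in> D" using co by (simp add: corner_def)
  have cd: "card (D - {x}) = card D - 1" using fin x by simp
  obtain k where k: "1 \<le> k" "Suc k \<le> card (D - {x})" "W = sk k \<circ> V" using e unfolding yedge_def by blast
  have V: "isyt D (V(x := card D))" using e isyt_add[OF _ co fin dc] unfolding yedge_def by blast
  have W: "isyt D (W(x := card D))" using e isyt_add[OF _ co fin dc] unfolding yedge_def by blast
  have "W(x := card D) = sk k \<circ> (V(x := card D))"
  proof
    fix y show "(W(x := card D)) y = (sk k \<circ> V(x := card D)) y"
      using k cd by (cases "y = x") (auto simp: Transposition.transpose_def)
  qed
  thus ?thesis using V W k cd unfolding yedge_def by auto
qed

lemma path_lift:
  assumes fin: "finite D" and dc: "dclosed D" and co: "corner D x"
    and p: "(yedge (D - {x}))\<^sup>*\<^sup>* V W"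
  shows "(yedge D)\<^sup>*\<^sup>* (V(x := card D)) (W(x := card D))"
  using p
proof (induction rule: rtranclp_induct)
  case base then show ?case by simp
next
  case (step W Z)
  then show ?case using yedge_lift[OF fin dc co step(2)] by (meson rtranclp.rtrancl_into_rtrancl)
qed

lemma corner_remove_other:
  assumes "corner D y" "y \<noteq> x"
  shows "corner (D - {x}) y"
  using assms unfolding corner_def by auto

lemma isyt_connected:
  assumes "finite D" "dclosed D" "isyt D T" "isyt D U"
  shows "(yedge D)\<^sup>*\<^sup>* T U"
  using assms
proof (induction "card D" arbitrary: D T U)
  case 0
  hence D: "D = {}" by simp
  have "T = U"
  proof
    fix z show "T z = U z"
      using bfill_zero[OF isyt_bfill[OF "0.prems"(3)], of z] bfill_zero[OF isyt_bfill[OF "0.prems"(4)], of z] D by simp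
  qed
  thus ?case by simp
next
  case (Suc m)
  note fin = Suc.prems(1) and dc = Suc.prems(2) and T = Suc.prems(3) and U = Suc.prems(4)
  have bT: "bfill D T" using T by (rule isyt_bfill)
  have bU: "bfill D U" using U by (rule isyt_bfill)
  define n where "n = card D"
  have n: "n = Suc m" using Suc.hyps(2) by (simp add: n_def)
  define x where "x = pos D T n"
  define y where "y = pos D U n"
  have xD: "x \<in> D" "T x = n" using bfill_pos[OF bT, of n] n by (auto simp: x_def n_def)
  have yD: "y \<in> D" "U y = n" using bfill_pos[OF bU, of n] n by (auto simp: y_def n_def)
  have cx: "corner D x" using corner_max[OF T xD(1)] xD by (simp add: n_def)
  have cy: "corner D y" using corner_max[OF U yD(1)] yD by (simp add: n_def)
  have Tr: "isyt (D - {x}) (T(x := 0))" using isyt_remove[OF T dc fin xD(1)] xD by (simp add: n_def)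
  have Ur: "isyt (D - {y}) (U(y := 0))" using isyt_remove[OF U dc fin yD(1)] yD by (simp add: n_def)
  have Teq: "T = (T(x := 0))(x := n)" using xD by (simp add: fun_eq_iff)
  have Ueq: "U = (U(y := 0))(y := n)" using yD by (simp add: fun_eq_iff)
  have cdx: "m = card (D - {x})" using fin xD n by (simp add: n_def)
  have cdy: "m = card (D - {y})" using fin yD n by (simp add: n_def)
  have dcx: "dclosed (D - {x})" using dclosed_remove[OF dc cx] .
  have dcy: "dclosed (D - {y})" using dclosed_remove[OF dc cy] .
  show ?case
  proof (cases "x = y")
    case True
    have "(yedge (D - {x}))\<^sup>*\<^sup>* (T(x := 0)) (U(x := 0))"
      using Suc.hyps(1)[OF cdx _ dcx Tr] Ur True fin by simp
    from path_lift[OF fin dc cx this] show ?thesis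
      using Teq Ueq True by (simp add: n_def)
  next
    case False
    have cyx: "corner (D - {x}) y" using corner_remove_other[OF cy] False by simp
    have cxy: "corner (D - {y}) x" using corner_remove_other[OF cx] False by simp
    define D2 where "D2 = D - {x} - {y}"
    have D2': "D2 = D - {y} - {x}" by (auto simp: D2_def)
    have dc2: "dclosed D2" unfolding D2_def using dclosed_remove[OF dcx cyx] .
    have fin2: "finite D2" using fin by (simp add: D2_def)
    obtain W where W: "isyt D2 W" using isyt_exists[OF fin2 dc2] by blast
    have TW: "isyt (D - {x}) (W(y := m))"
      using isyt_add[OF W[unfolded D2_def] cyx] fin dcx cdx by simp
    have UW: "isyt (D - {y}) (W(x := m))"
      using isyt_add[OF W[unfolded D2'] cxy] fin dcy cdy by simp
    have T1: "isyt D ((W(y := m))(x := n))"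
      using isyt_add[OF TW cx fin dc] by (simp add: n_def)
    have U1: "isyt D ((W(x := m))(y := n))"
      using isyt_add[OF UW cy fin dc] by (simp add: n_def)
    have p1: "(yedge D)\<^sup>*\<^sup>* T ((W(y := m))(x := n))"
    proof -
      have "(yedge (D - {x}))\<^sup>*\<^sup>* (T(x := 0)) (W(y := m))"
        using Suc.hyps(1)[OF cdx _ dcx Tr TW] fin by simp
      from path_lift[OF fin dc cx this] show ?thesis using Teq by (simp add: n_def)
    qed
    have p3: "(yedge D)\<^sup>*\<^sup>* ((W(x := m))(y := n)) U"
    proof -
      have "(yedge (D - {y}))\<^sup>*\<^sup>* (W(x := m)) (U(y := 0))"
        using Suc.hyps(1)[OF cdy _ dcy UW Ur] fin by simp
      from path_lift[OF fin dc cy this] show ?thesis using Ueq by (simp add: n_def)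
    qed
    have m1: "1 \<le> m"
    proof -
      have "{x, y} \<subseteq> D" using xD yD by simp
      hence "card {x, y} \<le> card D" using fin by (rule card_mono[rotated])
      thus ?thesis using False n by (simp add: n_def)
    qed
    have bW: "bfill D2 W" using W by (rule isyt_bfill)
    have cd2: "card D2 = m - 1" using fin xD yD False cdx by (simp add: D2_def)
    have "(W(x := m))(y := n) = sk m \<circ> ((W(y := m))(x := n))"
    proof
      fix z
      show "((W(x := m))(y := n)) z = (sk m \<circ> (W(y := m))(x := n)) z"
      proof (cases "z = x \<or> z = y")
        case True
        then show ?thesis using False n by (auto simp: Transposition.transpose_def)
      next
        case nz: False
        have "W z \<noteq> m \<and> W z \<noteq> Suc m"
        proof (cases "z \<in> D2")
          case True
          have "W z \<in> {1..card D2}" by (rule bfill_range[OF bW True])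
          thus ?thesis using cd2 m1 by auto
        next
          case False
          thus ?thesis using bfill_zero[OF bW False] m1 by simp
        qed
        thus ?thesis using nz by (auto simp: Transposition.transpose_def)
      qed
    qed
    hence p2: "yedge D ((W(y := m))(x := n)) ((W(x := m))(y := n))"
      unfolding yedge_def using T1 U1 m1 n by (auto simp: n_def)
    show ?thesis using p1 p2 p3
      by (meson rtranclp.rtrancl_into_rtrancl rtranclp_trans)
  qed
qed

section \<open>Young's orthogonal form as operators on functions of fillings\<close>

definition dgc :: "int \<Rightarrow> complex" where
  "dgc r = complex_of_real (1 / real_of_int r)"

definition odc :: "int \<Rightarrow> complex" where
  "odc r = complex_of_real (sqrt (1 - 1 / (real_of_int r)\<^sup>2))"

lemma dgc_neg: "dgc (- r) = - dgc r"
  by (simp add: dgc_def)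

lemma odc_neg: "odc (- r) = odc r"
  by (simp add: odc_def)

lemma dgc_swap: "dgc (a - b) = - dgc (b - a)"
  using dgc_neg[of "b - a"] by simp

lemma odc_swap: "odc (a - b) = odc (b - a)"
  using odc_neg[of "b - a"] by simp

lemma dgc_odc_sq:
  assumes "r \<noteq> 0"
  shows "(odc r)\<^sup>2 = 1 - (dgc r)\<^sup>2"
proof -
  have "(real_of_int r)\<^sup>2 \<ge> 1"
  proof -
    have "\<bar>r\<bar> \<ge> 1" using assms by simp
    hence "\<bar>real_of_int r\<bar> \<ge> 1" by linarith
    hence "1 * 1 \<le> \<bar>real_of_int r\<bar> * \<bar>real_of_int r\<bar>" by (intro mult_mono) auto
    thus ?thesis by (simp add: power2_eq_square)
  qed
  hence "1 / (real_of_int r)\<^sup>2 \<le> 1" by (simp add: divide_simps)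
  hence "(sqrt (1 - 1 / (real_of_int r)\<^sup>2))\<^sup>2 = 1 - 1 / (real_of_int r)\<^sup>2" by simp
  hence "complex_of_real ((sqrt (1 - 1 / (real_of_int r)\<^sup>2))\<^sup>2) = complex_of_real (1 - (1 / real_of_int r)\<^sup>2)"
    by (simp add: power_divide)
  thus ?thesis unfolding odc_def dgc_def by (metis of_real_1 of_real_diff of_real_power)
qed

lemma odc_one: "\<bar>r\<bar> = 1 \<Longrightarrow> odc r = 0"
  by (auto simp: odc_def abs_if split: if_splits)

lemma odc_nz: "\<bar>r\<bar> \<ge> 2 \<Longrightarrow> odc r \<noteq> 0"
proof -
  assume "\<bar>r\<bar> \<ge> 2"
  hence "\<bar>real_of_int r\<bar> \<ge> 2" by linarith
  hence "2 * 2 \<le> \<bar>real_of_int r\<bar> * \<bar>real_of_int r\<bar>" by (intro mult_mono) auto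
  hence "(real_of_int r)\<^sup>2 \<ge> 4" by (simp add: power2_eq_square)
  hence "1 / (real_of_int r)\<^sup>2 < 1" by (simp add: divide_simps)
  hence "1 - 1 / (real_of_int r)\<^sup>2 > 0" by simp
  hence "sqrt (1 - 1 / (real_of_int r)\<^sup>2) > 0" by (rule real_sqrt_gt_zero)
  hence "sqrt (1 - 1 / (real_of_int r)\<^sup>2) \<noteq> 0" by (rule less_imp_neq[symmetric])
  thus "odc r \<noteq> 0" unfolding odc_def by (simp only: of_real_eq_0_iff not_False_eq_True)
qed

lemma dgc_mult: "r \<noteq> 0 \<Longrightarrow> dgc r * of_int r = 1"
  by (simp add: dgc_def)

definition Op :: "cell set \<Rightarrow> nat \<Rightarrow> ((cell \<Rightarrow> nat) \<Rightarrow> complex) \<Rightarrow> (cell \<Rightarrow> nat) \<Rightarrow> complex" where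
  "Op D k F V = dgc (rho D V k) * F V + odc (rho D V k) * F (sk k \<circ> V)"

lemma bfill_sk_simp [simp]:
  "bfill D T \<Longrightarrow> 1 \<le> k \<Longrightarrow> k < card D \<Longrightarrow> bfill D (sk k \<circ> T)"
  by (rule bfill_sk)

lemma cont_sk_simp [simp]:
  "bfill D T \<Longrightarrow> 1 \<le> k \<Longrightarrow> k < card D \<Longrightarrow> 1 \<le> j \<Longrightarrow> j \<le> card D \<Longrightarrow>
   cont D (sk k \<circ> T) j = cont D T (sk k j)"
  by (rule cont_sk) auto

lemma Op_local:
  assumes V: "isyt D V" and dc: "dclosed D" and k: "1 \<le> k" "Suc k \<le> card D"
    and FG: "\<And>U. isyt D U \<Longrightarrow> F U = G U"
  shows "Op D k F V = Op D k G V"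
proof (cases "isyt D (sk k \<circ> V)")
  case True
  then show ?thesis using FG V by (simp add: Op_def)
next
  case False
  hence "adjc (pos D V k) (pos D V (Suc k))" using isyt_sk_iff[OF V dc k] by simp
  hence "odc (rho D V k) = 0" using rho_adj[OF V dc k] odc_one by blast
  then show ?thesis using FG V by (simp add: Op_def)
qed

lemma Op_sq:
  assumes V: "isyt D V" and dc: "dclosed D" and k: "1 \<le> k" "Suc k \<le> card D"
  shows "Op D k (Op D k F) V = F V"
proof -
  have bV: "bfill D V" using V by (rule isyt_bfill)
  have nz: "rho D V k \<noteq> 0" by (rule rho_nz[OF V dc k])
  have r: "rho D (sk k \<circ> V) k = - rho D V k" by (rule rho_sk[OF bV k])
  have "Op D k (Op D k F) V = ((dgc (rho D V k))\<^sup>2 + (odc (rho D V k))\<^sup>2) * F V"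
    unfolding Op_def using r by (simp add: dgc_neg odc_neg algebra_simps power2_eq_square)
  also have "\<dots> = F V" using dgc_odc_sq[OF nz] by simp
  finally show ?thesis .
qed

lemma sk_comm_comp:
  assumes "Suc i < j"
  shows "sk j \<circ> (sk i \<circ> V) = sk i \<circ> (sk j \<circ> V)"
  using assms by (auto simp: fun_eq_iff Transposition.transpose_def)

lemma sk_braid_comp:
  "sk (Suc k) \<circ> (sk k \<circ> (sk (Suc k) \<circ> V)) = sk k \<circ> (sk (Suc k) \<circ> (sk k \<circ> V))"
  by (auto simp: fun_eq_iff Transposition.transpose_def)

lemma Op_comm:
  assumes V: "bfill D V" and ij: "1 \<le> i" "Suc i < j" "Suc j \<le> card D"
  shows "Op D i (Op D j F) V = Op D j (Op D i F) V"
proof -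
  have r1: "rho D (sk i \<circ> V) j = rho D V j"
    using V ij by (simp add: rho_def Transposition.transpose_def)
  have r2: "rho D (sk j \<circ> V) i = rho D V i"
    using V ij by (simp add: rho_def Transposition.transpose_def)
  show ?thesis unfolding Op_def using r1 r2 sk_comm_comp[OF ij(2), of V]
    by (simp add: algebra_simps)
qed

lemma Op_braid:
  assumes V: "isyt D V" and dc: "dclosed D" and k: "1 \<le> k" "Suc (Suc k) \<le> card D"
  shows "Op D k (Op D (Suc k) (Op D k F)) V = Op D (Suc k) (Op D k (Op D (Suc k) F)) V"
proof -
  have bV: "bfill D V" using V by (rule isyt_bfill)
  define a where "a = cont D V k"
  define b where "b = cont D V (Suc k)"
  define c where "c = cont D V (Suc (Suc k))"
  have ab: "b - a \<noteq> 0" using cont_distinct1[OF V dc, of k] k by (simp add: a_def b_def)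
  have bc: "c - b \<noteq> 0" using cont_distinct1[OF V dc, of "Suc k"] k by (simp add: c_def b_def)
  have ac: "c - a \<noteq> 0" using cont_distinct2[OF V dc k] by (simp add: a_def c_def)
  have e1: "dgc (b - a) * (dgc (c - b) - dgc (c - a)) = dgc (c - b) * dgc (c - a)"
    using ab bc ac unfolding dgc_def
    by (simp add: field_simps)
  have e2: "dgc (c - b) * (dgc (b - a) - dgc (c - a)) = dgc (b - a) * dgc (c - a)"
    using ab bc ac unfolding dgc_def
    by (simp add: field_simps)
  have q1: "(odc (b - a))\<^sup>2 = 1 - (dgc (b - a))\<^sup>2" by (rule dgc_odc_sq[OF ab])
  have q2: "(odc (c - b))\<^sup>2 = 1 - (dgc (c - b))\<^sup>2" by (rule dgc_odc_sq[OF bc])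
  have s1: "dgc (a - b) = - dgc (b - a)" "dgc (b - c) = - dgc (c - b)" "dgc (a - c) = - dgc (c - a)"
    by (simp_all add: dgc_swap[symmetric])
  have s2: "odc (a - b) = odc (b - a)" "odc (b - c) = odc (c - b)" "odc (a - c) = odc (c - a)"
    by (simp_all add: odc_swap)
  show ?thesis
    unfolding Op_def rho_def
    using bV k
    apply (simp add: Transposition.transpose_def sk_braid_comp flip: a_def b_def c_def)
    apply (simp only: s1 s2)
    using e1 e2 q1 q2 by algebra
qed

lemma Op_JM:
  assumes V: "isyt D V" and dc: "dclosed D" and k: "1 \<le> k" "Suc k \<le> card D"
  shows "Op D k (\<lambda>W. of_int (cont D W k) * Op D k F W) V + Op D k F V
         = of_int (cont D V (Suc k)) * F V"
proof -
  have bV: "bfill D V" using V by (rule isyt_bfill)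
  define a where "a = cont D V k"
  define b where "b = cont D V (Suc k)"
  have ab: "b - a \<noteq> 0" using cont_distinct1[OF V dc k] by (simp add: a_def b_def)
  have q: "(odc (b - a))\<^sup>2 = 1 - (dgc (b - a))\<^sup>2" by (rule dgc_odc_sq[OF ab])
  have m: "dgc (b - a) * (of_int b - of_int a) = 1" using dgc_mult[OF ab] by simp
  have s1: "dgc (a - b) = - dgc (b - a)" by (simp add: dgc_swap[symmetric])
  have s2: "odc (a - b) = odc (b - a)" by (simp add: odc_swap)
  show ?thesis
    unfolding Op_def rho_def
    using bV k
    apply (simp add: Transposition.transpose_def flip: a_def b_def)
    apply (simp only: s1 s2)
    using q m by algebra
qed

section \<open>Partitions\<close>

lemma cells_Nil: "cells [] = {}"
  by (simp add: cells_def)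

lemma cells_Cons: "cells (a # \<mu>) = ({0} \<times> {..<a}) \<union> apfst Suc ` cells \<mu>"
proof (rule set_eqI)
  fix x :: "nat \<times> nat"
  obtain r c where x: "x = (r, c)" by (cases x)
  show "x \<in> cells (a # \<mu>) \<longleftrightarrow> x \<in> ({0} \<times> {..<a}) \<union> apfst Suc ` cells \<mu>"
  proof (cases r)
    case 0 then show ?thesis using x by (auto simp: cells_def apfst_def map_prod_def)
  next
    case (Suc r')
    have "(Suc r', c) \<in> apfst Suc ` cells \<mu> \<longleftrightarrow> (r', c) \<in> cells \<mu>"
    proof
      assume "(r', c) \<in> cells \<mu>"
      thus "(Suc r', c) \<in> apfst Suc ` cells \<mu>" by (rule image_eqI[rotated]) simp
    next
      assume "(Suc r', c) \<in> apfst Suc ` cells \<mu>"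
      then obtain y where "y \<in> cells \<mu>" "(Suc r', c) = apfst Suc y" by blast
      thus "(r', c) \<in> cells \<mu>" by (cases y) simp
    qed
    then show ?thesis using x Suc by (auto simp: cells_def)
  qed
qed

lemma finite_cells: "finite (cells \<mu>)"
  by (induction \<mu>) (auto simp: cells_Nil cells_Cons)

lemma card_cells: "card (cells \<mu>) = sum_list \<mu>"
proof (induction \<mu>)
  case Nil then show ?case by (simp add: cells_Nil)
next
  case (Cons a \<mu>)
  have inj: "inj_on (apfst Suc) (cells \<mu>)" by (auto simp: inj_on_def apfst_def map_prod_def)
  have disj: "({0} \<times> {..<a}) \<inter> apfst Suc ` cells \<mu> = {}" by (auto simp: apfst_def map_prod_def)
  have "card (cells (a # \<mu>)) = card ({0::nat} \<times> {..<a}) + card (apfst Suc ` cells \<mu>)"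
    unfolding cells_Cons by (rule card_Un_disjoint) (auto simp: finite_cells disj)
  also have "\<dots> = a + card (cells \<mu>)" using card_image[OF inj] by (simp add: card_cartesian_product)
  finally show ?case using Cons by simp
qed

lemma dclosed_cells:
  assumes "sorted_wrt (\<ge>) \<mu>"
  shows "dclosed (cells \<mu>)"
  unfolding dclosed_def
proof (intro allI impI)
  fix r c r' c'
  assume h0: "(r, c) \<in> cells \<mu>" "r' \<le> r" "c' \<le> c"
  hence h: "r < length \<mu>" "c < \<mu> ! r" "r' \<le> r" "c' \<le> c" by (auto simp: cells_def)
  have "\<mu> ! r \<le> \<mu> ! r'"
  proof (cases "r' = r")
    case False
    hence "r' < r" using h by simp
    thus ?thesis using assms h by (simp add: sorted_wrt_iff_nth_less)
  qed simp
  thus "(r', c') \<in> cells \<mu>" using h by (simp add: cells_def)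
qed

lemma cells_inj:
  assumes "0 \<notin> set \<mu>" "0 \<notin> set \<mu>'" "cells \<mu> = cells \<mu>'"
  shows "\<mu> = \<mu>'"
proof -
  have mem: "(r, c) \<in> cells \<mu> \<longleftrightarrow> r < length \<mu> \<and> c < \<mu> ! r" for \<mu> :: "nat list" and r c
    by (simp add: cells_def)
  have len: "r < length \<mu> \<longleftrightarrow> (r, 0) \<in> cells \<mu>" if "0 \<notin> set \<mu>" for \<mu> :: "nat list" and r
    using that by (auto simp: cells_def) (metis gr0I nth_mem)
  have "\<forall>r. r < length \<mu> \<longleftrightarrow> r < length \<mu>'" using len[OF assms(1)] len[OF assms(2)] assms(3) by simp
  hence L: "length \<mu> = length \<mu>'" by (metis linorder_neqE_nat less_irrefl)
  show ?thesis
  proof (rule nth_equalityI[OF L])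
    fix r assume r: "r < length \<mu>"
    have "\<forall>c. c < \<mu> ! r \<longleftrightarrow> c < \<mu>' ! r" using mem[of r _ \<mu>] mem[of r _ \<mu>'] assms(3) r L by simp
    thus "\<mu> ! r = \<mu>' ! r" by (metis linorder_neqE_nat less_irrefl)
  qed
qed

lemma syt_eq: "syt \<mu> = {T. isyt (cells \<mu>) T}"
  unfolding syt_def isyt_def bfill_def card_cells by blast

lemma content_eq: "content \<mu> T k = cont (cells \<mu>) T k"
  by (simp add: content_def cont_def pos_def Let_def)

lemma finite_syt: "finite (syt \<mu>)"
proof -
  have "syt \<mu> \<subseteq> {f. \<forall>x. (x \<in> cells \<mu> \<longrightarrow> f x \<in> {1..sum_list \<mu>}) \<and> (x \<notin> cells \<mu> \<longrightarrow> f x = 0)}"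
    unfolding syt_def bij_betw_def by blast
  moreover have "finite {f. \<forall>x. (x \<in> cells \<mu> \<longrightarrow> f x \<in> {1..sum_list \<mu>}) \<and> (x \<notin> cells \<mu> \<longrightarrow> f x = (0::nat))}"
    by (rule finite_set_of_finite_funs) (simp_all add: finite_cells)
  ultimately show ?thesis by (rule finite_subset)
qed

lemma tab_bij: "bij_betw (tab \<mu>) {1..dim \<mu>} (syt \<mu>)"
proof -
  have "\<exists>f. bij_betw f {1..dim \<mu>} (syt \<mu>)"
    unfolding dim_def by (rule ex_bij_betw_nat_finite_1[OF finite_syt])
  thus ?thesis unfolding tab_def by (rule someI_ex)
qed

lemma dim_pos: "is_partition p \<mu> \<Longrightarrow> dim \<mu> \<ge> 1"
proof -
  assume P: "is_partition p \<mu>"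
  have "dclosed (cells \<mu>)" using P dclosed_cells by (simp add: is_partition_def)
  then obtain T where "isyt (cells \<mu>) T" using isyt_exists[OF finite_cells] by blast
  hence "syt \<mu> \<noteq> {}" by (auto simp: syt_eq)
  thus ?thesis using finite_syt[of \<mu>] by (simp add: dim_def Suc_le_eq card_gt_0_iff)
qed

definition rmul :: "nat \<Rightarrow> (nat \<Rightarrow> nat \<Rightarrow> complex) \<Rightarrow> (nat \<Rightarrow> nat \<Rightarrow> complex) \<Rightarrow> nat \<Rightarrow> nat \<Rightarrow> complex" where
  "rmul n A B = (\<lambda>a b. if a \<in> {1..n} \<and> b \<in> {1..n} then matmul n A B a b else 0)"

definition rone :: "nat \<Rightarrow> nat \<Rightarrow> nat \<Rightarrow> complex" where
  "rone n = (\<lambda>a b. if a \<in> {1..n} \<and> b \<in> {1..n} \<and> a = b then 1 else 0)"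

definition rC :: "nat \<Rightarrow> (nat \<Rightarrow> nat \<Rightarrow> complex) set" where
  "rC n = {A. \<forall>a b. \<not> (a \<in> {1..n} \<and> b \<in> {1..n}) \<longrightarrow> A a b = 0}"

lemma rmul_in: "a \<in> {1..n} \<Longrightarrow> b \<in> {1..n} \<Longrightarrow> rmul n A B a b = matmul n A B a b"
  by (simp add: rmul_def)

lemma rmul_out: "\<not> (a \<in> {1..n} \<and> b \<in> {1..n}) \<Longrightarrow> rmul n A B a b = 0"
  unfolding rmul_def by (simp only: if_False)

lemma rone_out: "\<not> (a \<in> {1..n} \<and> b \<in> {1..n}) \<Longrightarrow> rone n a b = 0"
  unfolding rone_def by auto

lemma rmul_assoc: "rmul n (rmul n A B) C = rmul n A (rmul n B C)"
proof (intro ext)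
  fix a b
  show "rmul n (rmul n A B) C a b = rmul n A (rmul n B C) a b"
  proof (cases "a \<in> {1..n} \<and> b \<in> {1..n}")
    case True
    have "rmul n (rmul n A B) C a b = (\<Sum>c\<in>{1..n}. rmul n A B a c * C c b)"
      using True by (simp add: rmul_in matmul_def)
    also have "\<dots> = (\<Sum>c\<in>{1..n}. (\<Sum>d\<in>{1..n}. A a d * B d c) * C c b)"
      using True by (intro sum.cong refl) (simp add: rmul_in matmul_def)
    also have "\<dots> = (\<Sum>c\<in>{1..n}. \<Sum>d\<in>{1..n}. A a d * B d c * C c b)"
      by (simp add: sum_distrib_right)
    also have "\<dots> = (\<Sum>d\<in>{1..n}. \<Sum>c\<in>{1..n}. A a d * B d c * C c b)"
      by (rule sum.swap)
    also have "\<dots> = (\<Sum>d\<in>{1..n}. A a d * (\<Sum>c\<in>{1..n}. B d c * C c b))"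
      by (simp add: sum_distrib_left mult.assoc)
    also have "\<dots> = (\<Sum>d\<in>{1..n}. A a d * rmul n B C d b)"
      using True by (intro sum.cong refl) (simp add: rmul_in matmul_def)
    also have "\<dots> = rmul n A (rmul n B C) a b"
      using True by (simp add: rmul_in matmul_def)
    finally show ?thesis .
  next
    case False then show ?thesis by (simp add: rmul_out)
  qed
qed

lemma rmul_C: "rmul n A B \<in> rC n"
  by (simp add: rmul_def rC_def)

lemma rone_C: "rone n \<in> rC n"
  by (simp add: rone_def rC_def)

lemma rone_left: "A \<in> rC n \<Longrightarrow> rmul n (rone n) A = A"
proof (intro ext)
  fix a b assume A: "A \<in> rC n"
  show "rmul n (rone n) A a b = A a b"
  proof (cases "a \<in> {1..n} \<and> b \<in> {1..n}")
    case True
    have "rmul n (rone n) A a b = (\<Sum>c\<in>{1..n}. rone n a c * A c b)"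
      using True by (simp add: rmul_in matmul_def)
    also have "\<dots> = (\<Sum>c\<in>{1..n}. (if a = c then A a b else 0))"
      using True by (intro sum.cong refl) (simp add: rone_def)
    also have "\<dots> = A a b" using True by simp
    finally show ?thesis .
  next
    case False then show ?thesis using A by (simp add: rmul_out rC_def)
  qed
qed

lemma rone_right: "A \<in> rC n \<Longrightarrow> rmul n A (rone n) = A"
proof (intro ext)
  fix a b assume A: "A \<in> rC n"
  show "rmul n A (rone n) a b = A a b"
  proof (cases "a \<in> {1..n} \<and> b \<in> {1..n}")
    case True
    have "rmul n A (rone n) a b = (\<Sum>c\<in>{1..n}. A a c * rone n c b)"
      using True by (simp add: rmul_in matmul_def)
    also have "\<dots> = (\<Sum>c\<in>{1..n}. (if c = b then A a b else 0))"
      using True by (intro sum.cong refl) (auto simp: rone_def)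
    also have "\<dots> = A a b" using True by simp
    finally show ?thesis .
  next
    case False then show ?thesis using A by (simp add: rmul_out rC_def)
  qed
qed

definition rg :: "nat list \<Rightarrow> nat \<Rightarrow> nat \<Rightarrow> nat \<Rightarrow> complex" where
  "rg \<mu> k = (\<lambda>a b. if a \<in> {1..dim \<mu>} \<and> b \<in> {1..dim \<mu>} then young_gen \<mu> k a b else 0)"

definition Ymat :: "cell set \<Rightarrow> nat \<Rightarrow> (cell \<Rightarrow> nat) \<Rightarrow> (cell \<Rightarrow> nat) \<Rightarrow> complex" where
  "Ymat D k V U = (if V = U then dgc (rho D U k) else if V = sk k \<circ> U then odc (rho D U k) else 0)"

definition ed :: "nat \<Rightarrow> nat \<Rightarrow> complex" where
  "ed b = (\<lambda>c. if c = b then 1 else 0)"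

lemma sum_ed: "finite A \<Longrightarrow> b \<in> A \<Longrightarrow> (\<Sum>c\<in>A. f c * ed b c) = f b"
proof -
  assume "finite A" "b \<in> A"
  have "(\<Sum>c\<in>A. f c * ed b c) = (\<Sum>c\<in>A. if c = b then f b else 0)"
    by (rule sum.cong) (auto simp: ed_def)
  thus ?thesis using \<open>finite A\<close> \<open>b \<in> A\<close> by simp
qed

definition yspec :: "nat list \<Rightarrow> ((nat \<Rightarrow> nat) \<Rightarrow> nat \<Rightarrow> nat \<Rightarrow> complex) \<Rightarrow> bool" where
  "yspec \<mu> \<phi> \<longleftrightarrow>
      (\<forall>\<sigma> \<tau>. \<sigma> permutes {1..sum_list \<mu>} \<longrightarrow> \<tau> permutes {1..sum_list \<mu>} \<longrightarrow>
         (\<forall>a\<in>{1..dim \<mu>}. \<forall>b\<in>{1..dim \<mu>}. \<phi> (\<sigma> \<circ> \<tau>) a b = matmul (dim \<mu>) (\<phi> \<sigma>) (\<phi> \<tau>) a b))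
    \<and> (\<forall>k\<in>{1..<sum_list \<mu>}. \<forall>a\<in>{1..dim \<mu>}. \<forall>b\<in>{1..dim \<mu>}.
         \<phi> (Transposition.transpose k (Suc k)) a b = young_gen \<mu> k a b)"

lemma yrep_eq: "yrep \<mu> = Eps (yspec \<mu>)"
  unfolding yrep_def yspec_def by (rule refl)

locale ptn =
  fixes \<mu> :: "nat list" and p :: nat
  assumes P: "is_partition p \<mu>"
begin

definition tinv :: "(cell \<Rightarrow> nat) \<Rightarrow> nat" where
  "tinv = the_inv_into {1..dim \<mu>} (tab \<mu>)"

definition L :: "(nat \<Rightarrow> complex) \<Rightarrow> (cell \<Rightarrow> nat) \<Rightarrow> complex" where
  "L h U = h (tinv U)"

lemma dcD: "dclosed (cells \<mu>)"
  using P dclosed_cells by (simp add: is_partition_def)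

lemma cardD: "card (cells \<mu>) = p"
  using P by (simp add: card_cells is_partition_def)

lemma tab_isyt: "a \<in> {1..dim \<mu>} \<Longrightarrow> isyt (cells \<mu>) (tab \<mu> a)"
  using tab_bij[of \<mu>] unfolding bij_betw_def syt_eq by blast

lemma tab_inj: "a \<in> {1..dim \<mu>} \<Longrightarrow> b \<in> {1..dim \<mu>} \<Longrightarrow> tab \<mu> a = tab \<mu> b \<Longrightarrow> a = b"
  using tab_bij[of \<mu>] unfolding bij_betw_def inj_on_def by blast

lemma tinv_tab: "a \<in> {1..dim \<mu>} \<Longrightarrow> tinv (tab \<mu> a) = a"
  unfolding tinv_def using tab_bij[of \<mu>] by (simp add: bij_betw_def the_inv_into_f_f)

lemma tinv_in: "isyt (cells \<mu>) U \<Longrightarrow> tinv U \<in> {1..dim \<mu>}"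
  unfolding tinv_def using tab_bij[of \<mu>]
  by (metis bij_betw_def mem_Collect_eq syt_eq the_inv_into_into order_refl)

lemma tab_tinv: "isyt (cells \<mu>) U \<Longrightarrow> tab \<mu> (tinv U) = U"
  unfolding tinv_def using tab_bij[of \<mu>]
  by (metis bij_betw_def mem_Collect_eq syt_eq f_the_inv_into_f)

lemma yg_eq:
  assumes "a \<in> {1..dim \<mu>}" "b \<in> {1..dim \<mu>}"
  shows "young_gen \<mu> k a b = Ymat (cells \<mu>) k (tab \<mu> a) (tab \<mu> b)"
proof -
  have ab: "(a = b) = (tab \<mu> a = tab \<mu> b)" using tab_inj[OF assms] by auto
  have f: "(\<lambda>x. Transposition.transpose k (Suc k) (tab \<mu> b x)) = sk k \<circ> tab \<mu> b" by (simp add: o_def)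
  show ?thesis unfolding young_gen_def Ymat_def Let_def ab f
    by (simp add: content_eq rho_def dgc_def odc_def)
qed

lemma Ymat_sum:
  assumes V: "isyt (cells \<mu>) V" and k: "1 \<le> k" "Suc k \<le> p"
  shows "(\<Sum>U\<in>syt \<mu>. Ymat (cells \<mu>) k V U * g U) = Op (cells \<mu>) k g V"
proof -
  let ?D = "cells \<mu>"
  have kD: "1 \<le> k" "Suc k \<le> card ?D" using k cardD by auto
  have bV: "bfill ?D V" using V by (rule isyt_bfill)
  have VS: "V \<in> syt \<mu>" using V by (simp add: syt_eq)
  have ne: "sk k \<circ> V \<noteq> V"
  proof
    assume h: "sk k \<circ> V = V"
    have "(sk k \<circ> V) (pos ?D V k) = Suc k" using bfill_pos[OF bV, of k] kD by simp
    thus False using h bfill_pos[OF bV, of k] kD by simp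
  qed
  have eqv: "(V = sk k \<circ> U) \<longleftrightarrow> (U = sk k \<circ> V)" for U
  proof
    assume "V = sk k \<circ> U" thus "U = sk k \<circ> V" by simp
  next
    assume "U = sk k \<circ> V" thus "V = sk k \<circ> U" by simp
  qed
  have "(\<Sum>U\<in>syt \<mu>. Ymat ?D k V U * g U)
        = Ymat ?D k V V * g V + (\<Sum>U\<in>syt \<mu> - {V}. Ymat ?D k V U * g U)"
    by (rule sum.remove[OF finite_syt VS])
  also have "(\<Sum>U\<in>syt \<mu> - {V}. Ymat ?D k V U * g U)
      = (\<Sum>U\<in>syt \<mu> - {V}. if U = sk k \<circ> V then odc (rho ?D U k) * g U else 0)"
  proof (rule sum.cong[OF refl])
    fix U assume U: "U \<in> syt \<mu> - {V}"
    show "Ymat ?D k V U * g U = (if U = sk k \<circ> V then odc (rho ?D U k) * g U else 0)"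
    proof (cases "U = sk k \<circ> V")
      case True
      hence "V = sk k \<circ> U" using eqv by blast
      thus ?thesis using True U unfolding Ymat_def by auto
    next
      case False
      hence "V \<noteq> sk k \<circ> U" using eqv by blast
      thus ?thesis using False U unfolding Ymat_def by auto
    qed
  qed
  also have "\<dots> = (if sk k \<circ> V \<in> syt \<mu> - {V} then odc (rho ?D (sk k \<circ> V) k) * g (sk k \<circ> V) else 0)"
    using finite_syt by (simp add: sum.delta')
  also have "\<dots> = odc (rho ?D V k) * g (sk k \<circ> V)"
  proof (cases "sk k \<circ> V \<in> syt \<mu>")
    case True
    then show ?thesis using ne rho_sk[OF bV kD] by (simp add: odc_neg)
  next
    case False
    hence "\<not> isyt ?D (sk k \<circ> V)" by (simp add: syt_eq)
    hence "adjc (pos ?D V k) (pos ?D V (Suc k))" using isyt_sk_iff[OF V dcD kD] by simp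
    hence "odc (rho ?D V k) = 0" using rho_adj[OF V dcD kD] odc_one by blast
    then show ?thesis using False by simp
  qed
  finally show ?thesis by (simp add: Ymat_def Op_def)
qed

lemma yg_sum:
  assumes a: "a \<in> {1..dim \<mu>}" and k: "1 \<le> k" "Suc k \<le> p"
  shows "(\<Sum>c\<in>{1..dim \<mu>}. young_gen \<mu> k a c * h c) = Op (cells \<mu>) k (L h) (tab \<mu> a)"
proof -
  have "(\<Sum>c\<in>{1..dim \<mu>}. young_gen \<mu> k a c * h c)
        = (\<Sum>c\<in>{1..dim \<mu>}. Ymat (cells \<mu>) k (tab \<mu> a) (tab \<mu> c) * L h (tab \<mu> c))"
    using a by (intro sum.cong) (auto simp: yg_eq L_def tinv_tab)
  also have "\<dots> = (\<Sum>U\<in>syt \<mu>. Ymat (cells \<mu>) k (tab \<mu> a) U * L h U)"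
    by (rule sum.reindex_bij_betw[OF tab_bij])
  also have "\<dots> = Op (cells \<mu>) k (L h) (tab \<mu> a)"
    by (rule Ymat_sum[OF tab_isyt[OF a] k])
  finally show ?thesis .
qed

definition rep :: "(nat \<Rightarrow> nat \<Rightarrow> complex) \<Rightarrow> nat \<Rightarrow> ((cell \<Rightarrow> nat) \<Rightarrow> complex) \<Rightarrow> bool" where
  "rep B b G \<longleftrightarrow> (\<forall>U. isyt (cells \<mu>) U \<longrightarrow> B (tinv U) b = G U)"

lemma rep_entry: "rep B b G \<Longrightarrow> a \<in> {1..dim \<mu>} \<Longrightarrow> B a b = G (tab \<mu> a)"
  unfolding rep_def using tab_isyt tinv_tab by metis

lemma rep_g:
  assumes b: "b \<in> {1..dim \<mu>}" and k: "1 \<le> k" "Suc k \<le> p"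
  shows "rep (rg \<mu> k) b (Op (cells \<mu>) k (L (ed b)))"
  unfolding rep_def
proof (intro allI impI)
  fix U assume U: "isyt (cells \<mu>) U"
  have "rg \<mu> k (tinv U) b = young_gen \<mu> k (tinv U) b" using tinv_in[OF U] b by (simp add: rg_def)
  also have "\<dots> = (\<Sum>c\<in>{1..dim \<mu>}. young_gen \<mu> k (tinv U) c * ed b c)"
    using b by (simp add: sum_ed)
  also have "\<dots> = Op (cells \<mu>) k (L (ed b)) U"
    using yg_sum[OF tinv_in[OF U] k] tab_tinv[OF U] by simp
  finally show "rg \<mu> k (tinv U) b = Op (cells \<mu>) k (L (ed b)) U" .
qed

lemma rep_mul:
  assumes b: "b \<in> {1..dim \<mu>}" and k: "1 \<le> k" "Suc k \<le> p" and B: "rep B b G"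
  shows "rep (rmul (dim \<mu>) (rg \<mu> k) B) b (Op (cells \<mu>) k G)"
  unfolding rep_def
proof (intro allI impI)
  fix U assume U: "isyt (cells \<mu>) U"
  have kD: "1 \<le> k" "Suc k \<le> card (cells \<mu>)" using k cardD by auto
  have "rmul (dim \<mu>) (rg \<mu> k) B (tinv U) b = (\<Sum>c\<in>{1..dim \<mu>}. young_gen \<mu> k (tinv U) c * B c b)"
    using tinv_in[OF U] b by (simp add: rmul_def matmul_def rg_def)
  also have "\<dots> = Op (cells \<mu>) k (L (\<lambda>c. B c b)) U"
    using yg_sum[OF tinv_in[OF U] k] tab_tinv[OF U] by simp
  also have "\<dots> = Op (cells \<mu>) k G U"
    by (rule Op_local[OF U dcD kD]) (use B in \<open>simp add: rep_def L_def\<close>)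
  finally show "rmul (dim \<mu>) (rg \<mu> k) B (tinv U) b = Op (cells \<mu>) k G U" .
qed

lemma L_ed: "a \<in> {1..dim \<mu>} \<Longrightarrow> L (ed b) (tab \<mu> a) = (if a = b then 1 else 0)"
  by (simp add: L_def ed_def tinv_tab)

lemma rg_C: "rg \<mu> k \<in> rC (dim \<mu>)"
  by (simp add: rg_def rC_def)

lemma rg_gg:
  assumes k: "1 \<le> k" "Suc k \<le> p"
  shows "rmul (dim \<mu>) (rg \<mu> k) (rg \<mu> k) = rone (dim \<mu>)"
proof (intro ext)
  fix a b
  show "rmul (dim \<mu>) (rg \<mu> k) (rg \<mu> k) a b = rone (dim \<mu>) a b"
  proof (cases "a \<in> {1..dim \<mu>} \<and> b \<in> {1..dim \<mu>}")
    case True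
    hence a: "a \<in> {1..dim \<mu>}" and b: "b \<in> {1..dim \<mu>}" by auto
    have kD: "1 \<le> k" "Suc k \<le> card (cells \<mu>)" using k cardD by auto
    have "rmul (dim \<mu>) (rg \<mu> k) (rg \<mu> k) a b = Op (cells \<mu>) k (Op (cells \<mu>) k (L (ed b))) (tab \<mu> a)"
      by (rule rep_entry[OF rep_mul[OF b k rep_g[OF b k]] a])
    also have "\<dots> = L (ed b) (tab \<mu> a)" by (rule Op_sq[OF tab_isyt[OF a] dcD kD])
    also have "\<dots> = rone (dim \<mu>) a b" using a b by (simp add: L_ed rone_def)
    finally show ?thesis .
  next
    case False then show ?thesis by (simp only: rmul_out[OF False] rone_out[OF False])
  qed
qed

lemma rg_braid:
  assumes k: "1 \<le> k" "Suc (Suc k) \<le> p"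
  shows "rmul (dim \<mu>) (rmul (dim \<mu>) (rg \<mu> k) (rg \<mu> (Suc k))) (rg \<mu> k)
       = rmul (dim \<mu>) (rmul (dim \<mu>) (rg \<mu> (Suc k)) (rg \<mu> k)) (rg \<mu> (Suc k))"
  unfolding rmul_assoc
proof (intro ext)
  fix a b
  let ?N = "dim \<mu>"
  show "rmul ?N (rg \<mu> k) (rmul ?N (rg \<mu> (Suc k)) (rg \<mu> k)) a b
      = rmul ?N (rg \<mu> (Suc k)) (rmul ?N (rg \<mu> k) (rg \<mu> (Suc k))) a b"
  proof (cases "a \<in> {1..dim \<mu>} \<and> b \<in> {1..dim \<mu>}")
    case True
    hence a: "a \<in> {1..dim \<mu>}" and b: "b \<in> {1..dim \<mu>}" by auto
    have k0: "1 \<le> k" "Suc k \<le> p" using k by auto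
    have k1: "1 \<le> Suc k" "Suc (Suc k) \<le> p" using k by auto
    have kD: "1 \<le> k" "Suc (Suc k) \<le> card (cells \<mu>)" using k cardD by auto
    have "rmul ?N (rg \<mu> k) (rmul ?N (rg \<mu> (Suc k)) (rg \<mu> k)) a b
        = Op (cells \<mu>) k (Op (cells \<mu>) (Suc k) (Op (cells \<mu>) k (L (ed b)))) (tab \<mu> a)"
      by (rule rep_entry[OF rep_mul[OF b k0 rep_mul[OF b k1 rep_g[OF b k0]]] a])
    also have "\<dots> = Op (cells \<mu>) (Suc k) (Op (cells \<mu>) k (Op (cells \<mu>) (Suc k) (L (ed b)))) (tab \<mu> a)"
      by (rule Op_braid[OF tab_isyt[OF a] dcD kD])
    also have "\<dots> = rmul ?N (rg \<mu> (Suc k)) (rmul ?N (rg \<mu> k) (rg \<mu> (Suc k))) a b"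
      by (rule rep_entry[OF rep_mul[OF b k1 rep_mul[OF b k0 rep_g[OF b k1]]] a, symmetric])
    finally show ?thesis .
  next
    case False then show ?thesis by (simp add: rmul_out)
  qed
qed

lemma rg_comm:
  assumes ij: "1 \<le> i" "Suc (Suc i) \<le> j" "j < p"
  shows "rmul (dim \<mu>) (rg \<mu> i) (rg \<mu> j) = rmul (dim \<mu>) (rg \<mu> j) (rg \<mu> i)"
proof (intro ext)
  fix a b
  let ?N = "dim \<mu>"
  show "rmul ?N (rg \<mu> i) (rg \<mu> j) a b = rmul ?N (rg \<mu> j) (rg \<mu> i) a b"
  proof (cases "a \<in> {1..dim \<mu>} \<and> b \<in> {1..dim \<mu>}")
    case True
    hence a: "a \<in> {1..dim \<mu>}" and b: "b \<in> {1..dim \<mu>}" by auto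
    have ki: "1 \<le> i" "Suc i \<le> p" using ij by auto
    have kj: "1 \<le> j" "Suc j \<le> p" using ij by auto
    have "rmul ?N (rg \<mu> i) (rg \<mu> j) a b
        = Op (cells \<mu>) i (Op (cells \<mu>) j (L (ed b))) (tab \<mu> a)"
      by (rule rep_entry[OF rep_mul[OF b ki rep_g[OF b kj]] a])
    also have "\<dots> = Op (cells \<mu>) j (Op (cells \<mu>) i (L (ed b))) (tab \<mu> a)"
      using ij cardD by (intro Op_comm isyt_bfill tab_isyt a) auto
    also have "\<dots> = rmul ?N (rg \<mu> j) (rg \<mu> i) a b"
      by (rule rep_entry[OF rep_mul[OF b kj rep_g[OF b ki]] a, symmetric])
    finally show ?thesis .
  next
    case False then show ?thesis by (simp add: rmul_out)
  qed
qed

lemma coxrep_inst: "coxrep (rmul (dim \<mu>)) (rone (dim \<mu>)) (rC (dim \<mu>)) (rg \<mu>) p"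
proof (unfold_locales)
  fix a b c show "rmul (dim \<mu>) (rmul (dim \<mu>) a b) c = rmul (dim \<mu>) a (rmul (dim \<mu>) b c)"
    by (rule rmul_assoc)
next
  show "rone (dim \<mu>) \<in> rC (dim \<mu>)" by (rule rone_C)
next
  fix a b show "rmul (dim \<mu>) a b \<in> rC (dim \<mu>)" by (rule rmul_C)
next
  fix k show "rg \<mu> k \<in> rC (dim \<mu>)" by (rule rg_C)
next
  fix a assume "a \<in> rC (dim \<mu>)" thus "rmul (dim \<mu>) (rone (dim \<mu>)) a = a" by (rule rone_left)
next
  fix a assume "a \<in> rC (dim \<mu>)" thus "rmul (dim \<mu>) a (rone (dim \<mu>)) = a" by (rule rone_right)
next
  fix k assume "1 \<le> k" "k < p" thus "rmul (dim \<mu>) (rg \<mu> k) (rg \<mu> k) = rone (dim \<mu>)"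
    by (intro rg_gg) auto
next
  fix k assume "1 \<le> k" "Suc k < p"
  thus "rmul (dim \<mu>) (rmul (dim \<mu>) (rg \<mu> k) (rg \<mu> (Suc k))) (rg \<mu> k)
       = rmul (dim \<mu>) (rmul (dim \<mu>) (rg \<mu> (Suc k)) (rg \<mu> k)) (rg \<mu> (Suc k))"
    by (intro rg_braid) auto
next
  fix i j assume "1 \<le> i" "Suc (Suc i) \<le> j" "j < p"
  thus "rmul (dim \<mu>) (rg \<mu> i) (rg \<mu> j) = rmul (dim \<mu>) (rg \<mu> j) (rg \<mu> i)"
    by (rule rg_comm)
qed

lemma yrep_spec: "yspec \<mu> (yrep \<mu>)"
proof -
  have sp: "sum_list \<mu> = p" using P by (simp add: is_partition_def)
  have ex: "\<exists>\<phi>. (\<forall>s t. s permutes {1..p} \<longrightarrow> t permutes {1..p} \<longrightarrow> \<phi> (s \<circ> t) = rmul (dim \<mu>) (\<phi> s) (\<phi> t))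
            \<and> (\<forall>k. 1 \<le> k \<longrightarrow> k < p \<longrightarrow> \<phi> (sk k) = rg \<mu> k)"
    by (rule coxeter_presentation[OF coxrep_inst])
  then obtain \<phi> where h: "\<forall>s t. s permutes {1..p} \<longrightarrow> t permutes {1..p} \<longrightarrow> \<phi> (s \<circ> t) = rmul (dim \<mu>) (\<phi> s) (\<phi> t)"
    and g: "\<forall>k. 1 \<le> k \<longrightarrow> k < p \<longrightarrow> \<phi> (sk k) = rg \<mu> k"
    by (elim exE conjE)
  have "yspec \<mu> \<phi>"
    unfolding yspec_def
  proof (intro conjI allI impI ballI)
    fix \<sigma> \<tau> a b assume st: "\<sigma> permutes {1..sum_list \<mu>}" "\<tau> permutes {1..sum_list \<mu>}"
      and a: "a \<in> {1..dim \<mu>}" and b: "b \<in> {1..dim \<mu>}"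
    have "\<phi> (\<sigma> \<circ> \<tau>) = rmul (dim \<mu>) (\<phi> \<sigma>) (\<phi> \<tau>)" using h st unfolding sp by blast
    thus "\<phi> (\<sigma> \<circ> \<tau>) a b = matmul (dim \<mu>) (\<phi> \<sigma>) (\<phi> \<tau>) a b" using rmul_in[OF a b] by simp
  next
    fix k a b assume k: "k \<in> {1..<sum_list \<mu>}" and a: "a \<in> {1..dim \<mu>}" and b: "b \<in> {1..dim \<mu>}"
    have "\<phi> (sk k) = rg \<mu> k" using g k unfolding sp by simp
    thus "\<phi> (Transposition.transpose k (Suc k)) a b = young_gen \<mu> k a b" using a b by (simp add: rg_def)
  qed
  thus ?thesis unfolding yrep_eq by (rule someI[of "yspec \<mu>" \<phi>])
qed

lemma yrep_hom:
  "\<sigma> permutes {1..p} \<Longrightarrow> \<tau> permutes {1..p} \<Longrightarrow> a \<in> {1..dim \<mu>} \<Longrightarrow> b \<in> {1..dim \<mu>} \<Longrightarrow>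
   yrep \<mu> (\<sigma> \<circ> \<tau>) a b = matmul (dim \<mu>) (yrep \<mu> \<sigma>) (yrep \<mu> \<tau>) a b"
  using yrep_spec P unfolding yspec_def is_partition_def by blast

lemma yrep_gen:
  "1 \<le> k \<Longrightarrow> k < p \<Longrightarrow> a \<in> {1..dim \<mu>} \<Longrightarrow> b \<in> {1..dim \<mu>} \<Longrightarrow>
   yrep \<mu> (sk k) a b = young_gen \<mu> k a b"
  using yrep_spec P unfolding yspec_def is_partition_def by auto
lemma yrep_id:
  assumes p2: "2 \<le> p" and a: "a \<in> {1..dim \<mu>}" and b: "b \<in> {1..dim \<mu>}"
  shows "yrep \<mu> id a b = (if a = b then 1 else 0)"
proof -
  have sp: "sk 1 permutes {1..p}" using p2 by (intro permutes_swap_id) auto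
  have "yrep \<mu> id a b = yrep \<mu> (sk 1 \<circ> sk 1) a b" by simp
  also have "\<dots> = matmul (dim \<mu>) (yrep \<mu> (sk 1)) (yrep \<mu> (sk 1)) a b"
    by (rule yrep_hom[OF sp sp a b])
  also have "\<dots> = rmul (dim \<mu>) (rg \<mu> 1) (rg \<mu> 1) a b"
    using a b p2 by (simp add: rmul_in matmul_def rg_def yrep_gen)
  also have "\<dots> = rone (dim \<mu>) a b" using rg_gg[of 1] p2 by simp
  finally show ?thesis using a b by (simp add: rone_def)
qed

end

lemma transpose_conj:
  assumes "i < k"
  shows "Transposition.transpose i (Suc k) = sk k \<circ> (Transposition.transpose i k \<circ> sk k)"
  using assms by (auto simp: fun_eq_iff Transposition.transpose_def)

context ptn
begin

definition Jm :: "nat \<Rightarrow> nat \<Rightarrow> nat \<Rightarrow> complex" where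
  "Jm k a b = (\<Sum>i\<in>{1..<k}. yrep \<mu> (Transposition.transpose i k) a b)"

lemma perm_tr: "i \<in> {1..p} \<Longrightarrow> j \<in> {1..p} \<Longrightarrow> Transposition.transpose i j permutes {1..p}"
  by (rule permutes_swap_id)

lemma Jm_diag:
  assumes p2: "2 \<le> p" and k: "1 \<le> k" "k \<le> p" and a: "a \<in> {1..dim \<mu>}" and b: "b \<in> {1..dim \<mu>}"
  shows "Jm k a b = (if a = b then of_int (cont (cells \<mu>) (tab \<mu> a) k) else 0)"
  using k a b
proof (induction k arbitrary: a b rule: nat_induct_at_least)
  case base
  have "cont (cells \<mu>) (tab \<mu> a) 1 = 0"
    using cont_first[OF tab_isyt[OF base(2)] dcD] cardD p2 by simp
  then show ?case by (auto simp: Jm_def)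
next
  case (Suc k)
  note a = Suc.prems(2) and b = Suc.prems(3)
  have k: "1 \<le> k" "Suc k \<le> p" using Suc by auto
  have kD: "1 \<le> k" "Suc k \<le> card (cells \<mu>)" using k cardD by auto
  let ?N = "dim \<mu>"
  let ?I = "{1..dim \<mu>}"
  let ?G = "young_gen \<mu> k"
  have sperm: "sk k permutes {1..p}" using k by (intro perm_tr) auto
  have conj: "yrep \<mu> (Transposition.transpose i (Suc k)) a b
      = (\<Sum>c\<in>?I. ?G a c * (\<Sum>d\<in>?I. yrep \<mu> (Transposition.transpose i k) c d * ?G d b))"
    if i: "i \<in> {1..<k}" for i
  proof -
    have tp: "Transposition.transpose i k permutes {1..p}" using i k by (intro perm_tr) auto
    have tp2: "Transposition.transpose i k \<circ> sk k permutes {1..p}" by (rule permutes_compose[OF sperm tp])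
    have "yrep \<mu> (Transposition.transpose i (Suc k)) a b = yrep \<mu> (sk k \<circ> (Transposition.transpose i k \<circ> sk k)) a b"
      using i by (simp add: transpose_conj)
    also have "\<dots> = (\<Sum>c\<in>?I. yrep \<mu> (sk k) a c * yrep \<mu> (Transposition.transpose i k \<circ> sk k) c b)"
      using yrep_hom[OF sperm tp2 a b] by (simp add: matmul_def)
    also have "\<dots> = (\<Sum>c\<in>?I. ?G a c * (\<Sum>d\<in>?I. yrep \<mu> (Transposition.transpose i k) c d * ?G d b))"
    proof (rule sum.cong[OF refl])
      fix c assume c: "c \<in> ?I"
      have "yrep \<mu> (Transposition.transpose i k \<circ> sk k) c b = (\<Sum>d\<in>?I. yrep \<mu> (Transposition.transpose i k) c d * ?G d b)"
        using yrep_hom[OF tp sperm c b] yrep_gen[OF k(1)] k b by (simp add: matmul_def)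
      thus "yrep \<mu> (sk k) a c * yrep \<mu> (Transposition.transpose i k \<circ> sk k) c b
          = ?G a c * (\<Sum>d\<in>?I. yrep \<mu> (Transposition.transpose i k) c d * ?G d b)"
        using yrep_gen[OF k(1) _ a c] k by simp
    qed
    finally show ?thesis .
  qed
  have "(\<Sum>i\<in>{1..<k}. yrep \<mu> (Transposition.transpose i (Suc k)) a b)
      = (\<Sum>i\<in>{1..<k}. \<Sum>c\<in>?I. ?G a c * (\<Sum>d\<in>?I. yrep \<mu> (Transposition.transpose i k) c d * ?G d b))"
    by (rule sum.cong[OF refl]) (rule conj)
  also have "\<dots> = (\<Sum>c\<in>?I. \<Sum>i\<in>{1..<k}. ?G a c * (\<Sum>d\<in>?I. yrep \<mu> (Transposition.transpose i k) c d * ?G d b))"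
    by (rule sum.swap)
  also have "\<dots> = (\<Sum>c\<in>?I. ?G a c * (\<Sum>d\<in>?I. Jm k c d * ?G d b))"
  proof (rule sum.cong[OF refl])
    fix c
    have "(\<Sum>i\<in>{1..<k}. ?G a c * (\<Sum>d\<in>?I. yrep \<mu> (Transposition.transpose i k) c d * ?G d b))
        = ?G a c * (\<Sum>i\<in>{1..<k}. \<Sum>d\<in>?I. yrep \<mu> (Transposition.transpose i k) c d * ?G d b)"
      by (simp add: sum_distrib_left)
    also have "(\<Sum>i\<in>{1..<k}. \<Sum>d\<in>?I. yrep \<mu> (Transposition.transpose i k) c d * ?G d b)
        = (\<Sum>d\<in>?I. \<Sum>i\<in>{1..<k}. yrep \<mu> (Transposition.transpose i k) c d * ?G d b)"
      by (rule sum.swap)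
    also have "\<dots> = (\<Sum>d\<in>?I. Jm k c d * ?G d b)"
      unfolding Jm_def by (simp add: sum_distrib_right)
    finally show "(\<Sum>i\<in>{1..<k}. ?G a c * (\<Sum>d\<in>?I. yrep \<mu> (Transposition.transpose i k) c d * ?G d b))
        = ?G a c * (\<Sum>d\<in>?I. Jm k c d * ?G d b)" .
  qed
  also have "\<dots> = (\<Sum>c\<in>?I. ?G a c * (of_int (cont (cells \<mu>) (tab \<mu> c) k) * ?G c b))"
  proof (rule sum.cong[OF refl])
    fix c assume c: "c \<in> ?I"
    have "(\<Sum>d\<in>?I. Jm k c d * ?G d b) = (\<Sum>d\<in>?I. if d = c then of_int (cont (cells \<mu>) (tab \<mu> c) k) * ?G c b else 0)"
      by (rule sum.cong[OF refl]) (use Suc.IH c k in auto)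
    also have "\<dots> = of_int (cont (cells \<mu>) (tab \<mu> c) k) * ?G c b" using c by simp
    finally show "?G a c * (\<Sum>d\<in>?I. Jm k c d * ?G d b) = ?G a c * (of_int (cont (cells \<mu>) (tab \<mu> c) k) * ?G c b)"
      by simp
  qed
  also have "\<dots> = Op (cells \<mu>) k (L (\<lambda>c. of_int (cont (cells \<mu>) (tab \<mu> c) k) * ?G c b)) (tab \<mu> a)"
    by (rule yg_sum[OF a k])
  also have "\<dots> = Op (cells \<mu>) k (\<lambda>W. of_int (cont (cells \<mu>) W k) * Op (cells \<mu>) k (L (ed b)) W) (tab \<mu> a)"
  proof (rule Op_local[OF tab_isyt[OF a] dcD kD])
    fix U assume U: "isyt (cells \<mu>) U"
    have "?G (tinv U) b = (\<Sum>c\<in>?I. ?G (tinv U) c * ed b c)" using b by (simp add: sum_ed)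
    also have "\<dots> = Op (cells \<mu>) k (L (ed b)) U" using yg_sum[OF tinv_in[OF U] k] tab_tinv[OF U] by simp
    finally show "L (\<lambda>c. of_int (cont (cells \<mu>) (tab \<mu> c) k) * ?G c b) U
        = of_int (cont (cells \<mu>) U k) * Op (cells \<mu>) k (L (ed b)) U"
      by (simp add: L_def tab_tinv[OF U])
  qed
  finally have A: "(\<Sum>i\<in>{1..<k}. yrep \<mu> (Transposition.transpose i (Suc k)) a b)
      = Op (cells \<mu>) k (\<lambda>W. of_int (cont (cells \<mu>) W k) * Op (cells \<mu>) k (L (ed b)) W) (tab \<mu> a)" .
  have B: "yrep \<mu> (Transposition.transpose k (Suc k)) a b = Op (cells \<mu>) k (L (ed b)) (tab \<mu> a)"
  proof -
    have "yrep \<mu> (Transposition.transpose k (Suc k)) a b = ?G a b" using yrep_gen[OF k(1) _ a b] k by simp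
    also have "\<dots> = (\<Sum>c\<in>?I. ?G a c * ed b c)" using b by (simp add: sum_ed)
    also have "\<dots> = Op (cells \<mu>) k (L (ed b)) (tab \<mu> a)" by (rule yg_sum[OF a k])
    finally show ?thesis .
  qed
  have "Jm (Suc k) a b = (\<Sum>i\<in>{1..<k}. yrep \<mu> (Transposition.transpose i (Suc k)) a b)
        + yrep \<mu> (Transposition.transpose k (Suc k)) a b"
    unfolding Jm_def using k by (simp add: atLeastLessThanSuc)
  also have "\<dots> = of_int (cont (cells \<mu>) (tab \<mu> a) (Suc k)) * L (ed b) (tab \<mu> a)"
    unfolding A B by (rule Op_JM[OF tab_isyt[OF a] dcD kD])
  finally show ?case using a by (simp add: L_ed)
qed

end

lemma inv_comp_perm:
  assumes "q permutes S" "t permutes S"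
  shows "t \<circ> inv (q \<circ> t) = inv q"
proof -
  have "inv (q \<circ> t) = inv t \<circ> inv q"
    using assms by (simp add: o_inv_distrib permutes_bij)
  thus ?thesis using permutes_inv_o(1)[OF assms(2)] by (simp add: comp_assoc[symmetric])
qed

lemma odc_edge:
  assumes "isyt D T" "dclosed D" "1 \<le> k" "Suc k \<le> card D" "isyt D (sk k \<circ> T)"
  shows "odc (rho D T k) \<noteq> 0"
proof -
  have "\<not> adjc (pos D T k) (pos D T (Suc k))" using isyt_sk_iff[OF assms(1-4)] assms(5) by simp
  hence "\<bar>rho D T k\<bar> \<ge> 2" using rho_nonadj[OF assms(1-4)] by simp
  thus ?thesis by (rule odc_nz)
qed

lemma schur:
  assumes P1: "is_partition p \<mu>" and P2: "is_partition p \<mu>'" and p2: "2 \<le> p"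
    and r: "r \<in> {1..dim \<mu>}" and i: "i \<in> {1..dim \<mu>}"
    and j: "j \<in> {1..dim \<mu>'}" and r': "r' \<in> {1..dim \<mu>'}"
  shows "(\<Sum>\<sigma>\<in>{\<sigma>. \<sigma> permutes {1..p}}. yrep \<mu> (inv \<sigma>) r i * yrep \<mu>' \<sigma> j r')
       = (if \<mu> = \<mu>' \<and> r = r' \<and> i = j then of_nat (fact p) / of_nat (dim \<mu>) else 0)"
proof -
  interpret A: ptn \<mu> p by (unfold_locales) (rule P1)
  interpret B: ptn \<mu>' p by (unfold_locales) (rule P2)
  let ?P = "{\<sigma>. \<sigma> permutes {1..p}}"
  let ?I = "{1..dim \<mu>}"
  let ?I' = "{1..dim \<mu>'}"
  define M where "M a b = (\<Sum>\<sigma>\<in>?P. yrep \<mu> (inv \<sigma>) a i * yrep \<mu>' \<sigma> j b)" for a b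
  have finP: "finite ?P" by (rule finite_permutations) simp
  have intw: "(\<Sum>c\<in>?I. yrep \<mu> \<tau> a c * M c b) = (\<Sum>e\<in>?I'. M a e * yrep \<mu>' \<tau> e b)"
    if t: "\<tau> permutes {1..p}" and a: "a \<in> ?I" and b: "b \<in> ?I'" for \<tau> a b
  proof -
    have "(\<Sum>c\<in>?I. yrep \<mu> \<tau> a c * M c b)
        = (\<Sum>c\<in>?I. \<Sum>\<sigma>\<in>?P. yrep \<mu> \<tau> a c * yrep \<mu> (inv \<sigma>) c i * yrep \<mu>' \<sigma> j b)"
      unfolding M_def by (simp add: sum_distrib_left mult.assoc)
    also have "\<dots> = (\<Sum>\<sigma>\<in>?P. \<Sum>c\<in>?I. yrep \<mu> \<tau> a c * yrep \<mu> (inv \<sigma>) c i * yrep \<mu>' \<sigma> j b)"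
      by (rule sum.swap)
    also have "\<dots> = (\<Sum>\<sigma>\<in>?P. yrep \<mu> (\<tau> \<circ> inv \<sigma>) a i * yrep \<mu>' \<sigma> j b)"
    proof (rule sum.cong[OF refl])
      fix \<sigma> assume "\<sigma> \<in> ?P"
      hence si: "inv \<sigma> permutes {1..p}" by (simp add: permutes_inv)
      show "(\<Sum>c\<in>?I. yrep \<mu> \<tau> a c * yrep \<mu> (inv \<sigma>) c i * yrep \<mu>' \<sigma> j b)
          = yrep \<mu> (\<tau> \<circ> inv \<sigma>) a i * yrep \<mu>' \<sigma> j b"
        using A.yrep_hom[OF t si a i] by (simp add: matmul_def sum_distrib_right)
    qed
    also have "\<dots> = (\<Sum>q\<in>?P. yrep \<mu> (\<tau> \<circ> inv (q \<circ> \<tau>)) a i * yrep \<mu>' (q \<circ> \<tau>) j b)"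
      by (rule sum_permutations_compose_right[OF t])
    also have "\<dots> = (\<Sum>q\<in>?P. yrep \<mu> (inv q) a i * (\<Sum>e\<in>?I'. yrep \<mu>' q j e * yrep \<mu>' \<tau> e b))"
    proof (rule sum.cong[OF refl])
      fix q assume "q \<in> ?P"
      hence q: "q permutes {1..p}" by simp
      show "yrep \<mu> (\<tau> \<circ> inv (q \<circ> \<tau>)) a i * yrep \<mu>' (q \<circ> \<tau>) j b
          = yrep \<mu> (inv q) a i * (\<Sum>e\<in>?I'. yrep \<mu>' q j e * yrep \<mu>' \<tau> e b)"
        using inv_comp_perm[OF q t] B.yrep_hom[OF q t j b] by (simp add: matmul_def)
    qed
    also have "\<dots> = (\<Sum>q\<in>?P. \<Sum>e\<in>?I'. yrep \<mu> (inv q) a i * yrep \<mu>' q j e * yrep \<mu>' \<tau> e b)"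
      by (simp add: sum_distrib_left mult.assoc)
    also have "\<dots> = (\<Sum>e\<in>?I'. \<Sum>q\<in>?P. yrep \<mu> (inv q) a i * yrep \<mu>' q j e * yrep \<mu>' \<tau> e b)"
      by (rule sum.swap)
    also have "\<dots> = (\<Sum>e\<in>?I'. M a e * yrep \<mu>' \<tau> e b)"
      unfolding M_def by (simp add: sum_distrib_right)
    finally show ?thesis .
  qed
  have jcomm: "of_int (cont (cells \<mu>) (tab \<mu> a) k) * M a b = M a b * of_int (cont (cells \<mu>') (tab \<mu>' b) k)"
    if k: "1 \<le> k" "k \<le> p" and a: "a \<in> ?I" and b: "b \<in> ?I'" for k a b
  proof -
    have tp: "Transposition.transpose t k permutes {1..p}" if "t \<in> {1..<k}" for t
      using that k by (intro A.perm_tr) auto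
    have "(\<Sum>c\<in>?I. A.Jm k a c * M c b) = (\<Sum>c\<in>?I. \<Sum>t\<in>{1..<k}. yrep \<mu> (Transposition.transpose t k) a c * M c b)"
      unfolding A.Jm_def by (simp add: sum_distrib_right)
    also have "\<dots> = (\<Sum>t\<in>{1..<k}. \<Sum>c\<in>?I. yrep \<mu> (Transposition.transpose t k) a c * M c b)"
      by (rule sum.swap)
    also have "\<dots> = (\<Sum>t\<in>{1..<k}. \<Sum>e\<in>?I'. M a e * yrep \<mu>' (Transposition.transpose t k) e b)"
      by (rule sum.cong[OF refl]) (rule intw[OF tp a b])
    also have "\<dots> = (\<Sum>e\<in>?I'. \<Sum>t\<in>{1..<k}. M a e * yrep \<mu>' (Transposition.transpose t k) e b)"
      by (rule sum.swap)
    also have "\<dots> = (\<Sum>e\<in>?I'. M a e * B.Jm k e b)"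
      unfolding B.Jm_def by (simp add: sum_distrib_left)
    finally have eq: "(\<Sum>c\<in>?I. A.Jm k a c * M c b) = (\<Sum>e\<in>?I'. M a e * B.Jm k e b)" .
    have "(\<Sum>c\<in>?I. A.Jm k a c * M c b) = (\<Sum>c\<in>?I. if c = a then of_int (cont (cells \<mu>) (tab \<mu> a) k) * M a b else 0)"
      by (rule sum.cong[OF refl]) (use A.Jm_diag[OF p2 k a] in auto)
    also have "\<dots> = of_int (cont (cells \<mu>) (tab \<mu> a) k) * M a b" using a by simp
    finally have l: "(\<Sum>c\<in>?I. A.Jm k a c * M c b) = of_int (cont (cells \<mu>) (tab \<mu> a) k) * M a b" .
    have "(\<Sum>e\<in>?I'. M a e * B.Jm k e b) = (\<Sum>e\<in>?I'. if e = b then M a b * of_int (cont (cells \<mu>') (tab \<mu>' b) k) else 0)"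
      by (rule sum.cong[OF refl]) (use B.Jm_diag[OF p2 k _ b] in auto)
    also have "\<dots> = M a b * of_int (cont (cells \<mu>') (tab \<mu>' b) k)" using b by simp
    finally have r: "(\<Sum>e\<in>?I'. M a e * B.Jm k e b) = M a b * of_int (cont (cells \<mu>') (tab \<mu>' b) k)" .
    have "of_int (cont (cells \<mu>) (tab \<mu> a) k) * M a b = (\<Sum>c\<in>?I. A.Jm k a c * M c b)" using l by simp
    also have "\<dots> = (\<Sum>e\<in>?I'. M a e * B.Jm k e b)" by (rule eq)
    also have "\<dots> = M a b * of_int (cont (cells \<mu>') (tab \<mu>' b) k)" by (rule r)
    finally show ?thesis .
  qed
  have nz: "\<mu> = \<mu>' \<and> a = b" if a: "a \<in> ?I" and b: "b \<in> ?I'" and m: "M a b \<noteq> 0" for a b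
  proof -
    have ce: "\<forall>k\<in>{1..card (cells \<mu>)}. cont (cells \<mu>) (tab \<mu> a) k = cont (cells \<mu>') (tab \<mu>' b) k"
    proof
      fix k assume "k \<in> {1..card (cells \<mu>)}"
      hence k: "1 \<le> k" "k \<le> p" using A.cardD by auto
      have "of_int (cont (cells \<mu>) (tab \<mu> a) k) * M a b = of_int (cont (cells \<mu>') (tab \<mu>' b) k) * M a b"
        using jcomm[OF k a b] by (simp add: mult.commute)
      hence "(of_int (cont (cells \<mu>) (tab \<mu> a) k) :: complex) = of_int (cont (cells \<mu>') (tab \<mu>' b) k)"
        using m by simp
      thus "cont (cells \<mu>) (tab \<mu> a) k = cont (cells \<mu>') (tab \<mu>' b) k" by simp
    qed
    have "cells \<mu> = cells \<mu>' \<and> tab \<mu> a = tab \<mu>' b"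
      by (rule cont_inj[OF A.tab_isyt[OF a] B.tab_isyt[OF b] A.dcD B.dcD _ ce]) (simp add: A.cardD B.cardD)
    moreover have "0 \<notin> set \<mu>" "0 \<notin> set \<mu>'" using P1 P2 by (auto simp: is_partition_def)
    ultimately have mm: "\<mu> = \<mu>'" using cells_inj by blast
    hence "tab \<mu> a = tab \<mu> b" using \<open>cells \<mu> = cells \<mu>' \<and> tab \<mu> a = tab \<mu>' b\<close> by simp
    hence "a = b" using A.tab_inj[OF a] b mm by simp
    thus ?thesis using mm by simp
  qed
  show ?thesis
  proof (cases "\<mu> = \<mu>' \<and> r = r'")
    case False
    hence m0: "M r r' = 0" using nz[OF r r'] by blast
    have c: "\<not> (\<mu> = \<mu>' \<and> r = r' \<and> i = j)" using False by blast
    show ?thesis unfolding if_not_P[OF c] using m0 by (simp add: M_def)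
  next
    case True
    hence mm: "\<mu>' = \<mu>" and rr: "r' = r" by auto
    have step: "M (A.tinv T) (A.tinv T) = M (A.tinv U) (A.tinv U)" if e: "yedge (cells \<mu>) T U" for T U
    proof -
      obtain k where k: "1 \<le> k" "Suc k \<le> card (cells \<mu>)" "U = sk k \<circ> T"
        using e unfolding yedge_def by blast
      have T: "isyt (cells \<mu>) T" and U: "isyt (cells \<mu>) U" using e unfolding yedge_def by auto
      define a where "a = A.tinv U"
      define b where "b = A.tinv T"
      have a: "a \<in> ?I" and b: "b \<in> ?I" using A.tinv_in T U by (auto simp: a_def b_def)
      have ta: "tab \<mu> a = U" and tb: "tab \<mu> b = T" using A.tab_tinv T U by (auto simp: a_def b_def)
      have kp: "1 \<le> k" "k < p" using k A.cardD by auto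
      have sp: "sk k permutes {1..p}" using kp by (intro A.perm_tr) auto
      have bT: "bfill (cells \<mu>) T" using T by (rule isyt_bfill)
      have UT: "U \<noteq> T"
      proof
        assume h: "U = T"
        have e1: "(sk k \<circ> T) (pos (cells \<mu>) T k) = Suc k" using bfill_pos[OF bT, of k] k by simp
        have e2: "sk k \<circ> T = T" using h k(3) by simp
        have "T (pos (cells \<mu>) T k) = Suc k" using e1 unfolding e2 .
        thus False using bfill_pos[OF bT, of k] k by simp
      qed
      have ab: "a \<noteq> b" using UT ta tb by auto
      have G: "yrep \<mu> (sk k) a b = odc (rho (cells \<mu>) T k)"
        using A.yrep_gen[OF kp a b] A.yg_eq[OF a b] ta tb UT k(3) by (simp add: Ymat_def)
      have Gnz: "yrep \<mu> (sk k) a b \<noteq> 0"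
        unfolding G using odc_edge[OF T A.dcD k(1,2)] U k(3) by simp
      have bI': "b \<in> ?I'" using b mm by simp
      have "(\<Sum>c\<in>?I. yrep \<mu> (sk k) a c * M c b) = (\<Sum>c\<in>?I. if c = b then yrep \<mu> (sk k) a b * M b b else 0)"
      proof (rule sum.cong[OF refl])
        fix c assume c: "c \<in> ?I"
        show "yrep \<mu> (sk k) a c * M c b = (if c = b then yrep \<mu> (sk k) a b * M b b else 0)"
          using nz[OF c bI'] by auto
      qed
      also have "\<dots> = yrep \<mu> (sk k) a b * M b b" using b by simp
      finally have l: "(\<Sum>c\<in>?I. yrep \<mu> (sk k) a c * M c b) = yrep \<mu> (sk k) a b * M b b" .
      have "(\<Sum>e\<in>?I'. M a e * yrep \<mu>' (sk k) e b) = (\<Sum>e\<in>?I'. if e = a then M a a * yrep \<mu> (sk k) a b else 0)"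
      proof (rule sum.cong[OF refl])
        fix e assume e: "e \<in> ?I'"
        show "M a e * yrep \<mu>' (sk k) e b = (if e = a then M a a * yrep \<mu> (sk k) a b else 0)"
          using nz[OF a e] mm by auto
      qed
      also have "\<dots> = M a a * yrep \<mu> (sk k) a b" using a mm by simp
      finally have r: "(\<Sum>e\<in>?I'. M a e * yrep \<mu>' (sk k) e b) = M a a * yrep \<mu> (sk k) a b" .
      have "yrep \<mu> (sk k) a b * M b b = M a a * yrep \<mu> (sk k) a b"
        using intw[OF sp a bI'] l r by simp
      hence "M b b = M a a" using Gnz by (simp add: mult.commute)
      thus ?thesis by (simp add: a_def b_def)
    qed
    have path: "M (A.tinv T) (A.tinv T) = M (A.tinv U) (A.tinv U)"
      if "(yedge (cells \<mu>))\<^sup>*\<^sup>* T U" for T U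
      using that by (induction rule: rtranclp_induct) (auto dest: step)
    have alleq: "M a a = M r r" if a: "a \<in> ?I" for a
    proof -
      have "(yedge (cells \<mu>))\<^sup>*\<^sup>* (tab \<mu> a) (tab \<mu> r)"
        by (rule isyt_connected[OF finite_cells A.dcD A.tab_isyt[OF a] A.tab_isyt[OF r]])
      from path[OF this] show ?thesis using A.tinv_tab a r by simp
    qed
    have tr: "(\<Sum>a\<in>?I. M a a) = of_nat (fact p) * (if j = i then 1 else 0)"
    proof -
      have jI: "j \<in> ?I" using j mm by simp
      have "(\<Sum>a\<in>?I. M a a) = (\<Sum>a\<in>?I. \<Sum>\<sigma>\<in>?P. yrep \<mu> (inv \<sigma>) a i * yrep \<mu> \<sigma> j a)"
        unfolding M_def mm by simp
      also have "\<dots> = (\<Sum>\<sigma>\<in>?P. \<Sum>a\<in>?I. yrep \<mu> \<sigma> j a * yrep \<mu> (inv \<sigma>) a i)"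
        by (subst sum.swap) (simp add: mult.commute)
      also have "\<dots> = (\<Sum>\<sigma>\<in>?P. yrep \<mu> id j i)"
      proof (rule sum.cong[OF refl])
        fix \<sigma> assume "\<sigma> \<in> ?P"
        hence s: "\<sigma> permutes {1..p}" by simp
        have si: "inv \<sigma> permutes {1..p}" using s by (rule permutes_inv)
        have "yrep \<mu> (\<sigma> \<circ> inv \<sigma>) j i = (\<Sum>a\<in>?I. yrep \<mu> \<sigma> j a * yrep \<mu> (inv \<sigma>) a i)"
          using A.yrep_hom[OF s si jI i] by (simp add: matmul_def)
        thus "(\<Sum>a\<in>?I. yrep \<mu> \<sigma> j a * yrep \<mu> (inv \<sigma>) a i) = yrep \<mu> id j i"
          using permutes_inv_o(1)[OF s] by simp
      qed
      also have "\<dots> = of_nat (card ?P) * yrep \<mu> id j i" by simp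
      also have "card ?P = fact p" by (rule card_permutations) simp_all
      also have "yrep \<mu> id j i = (if j = i then 1 else 0)" by (rule A.yrep_id[OF p2 jI i])
      finally show ?thesis .
    qed
    have "(\<Sum>a\<in>?I. M a a) = of_nat (dim \<mu>) * M r r"
      using alleq by simp
    hence "of_nat (dim \<mu>) * M r r = of_nat (fact p) * (if j = i then 1 else 0)" using tr by simp
    moreover have "dim \<mu> \<ge> 1" by (rule dim_pos[OF P1])
    ultimately have "M r r = (if i = j then of_nat (fact p) / of_nat (dim \<mu>) else 0)"
      by (auto simp: field_simps)
    thus ?thesis using mm rr by (simp add: M_def)
  qed
qed

lemma finite_idx: "finite (idx d n)"
proof -
  have "idx d n = {xs. set xs \<subseteq> {..<d} \<and> length xs = n}" by (auto simp: idx_def)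
  thus ?thesis by (simp add: finite_lists_length_eq)
qed

lemma opmul_assoc: "opmul d n (opmul d n A B) C = opmul d n A (opmul d n B C)"
proof (intro ext)
  fix x y
  have "opmul d n (opmul d n A B) C x y = (\<Sum>z\<in>idx d n. \<Sum>w\<in>idx d n. A x w * B w z * C z y)"
    by (simp add: opmul_def sum_distrib_right)
  also have "\<dots> = (\<Sum>w\<in>idx d n. \<Sum>z\<in>idx d n. A x w * B w z * C z y)" by (rule sum.swap)
  also have "\<dots> = opmul d n A (opmul d n B C) x y"
    by (simp add: opmul_def sum_distrib_left mult.assoc)
  finally show "opmul d n (opmul d n A B) C x y = opmul d n A (opmul d n B C) x y" .
qed

lemma optr_comm: "optr d n (opmul d n A B) = optr d n (opmul d n B A)"
proof -
  have "optr d n (opmul d n A B) = (\<Sum>x\<in>idx d n. \<Sum>z\<in>idx d n. A x z * B z x)"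
    by (simp add: optr_def opmul_def)
  also have "\<dots> = (\<Sum>z\<in>idx d n. \<Sum>x\<in>idx d n. B z x * A x z)"
    by (subst sum.swap) (simp add: mult.commute)
  also have "\<dots> = optr d n (opmul d n B A)" by (simp add: optr_def opmul_def)
  finally show ?thesis .
qed

definition lc :: "'r set \<Rightarrow> ('r \<Rightarrow> complex) \<Rightarrow> ('r \<Rightarrow> op) \<Rightarrow> op" where
  "lc R a F = (\<lambda>x y. \<Sum>r\<in>R. a r * F r x y)"

lemma opmul_lc_left: "opmul d n (lc R a F) B = lc R a (\<lambda>r. opmul d n (F r) B)"
proof (intro ext)
  fix x y
  have "opmul d n (lc R a F) B x y = (\<Sum>z\<in>idx d n. \<Sum>r\<in>R. a r * F r x z * B z y)"
    by (simp add: opmul_def lc_def sum_distrib_right)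
  also have "\<dots> = (\<Sum>r\<in>R. \<Sum>z\<in>idx d n. a r * F r x z * B z y)" by (rule sum.swap)
  also have "\<dots> = lc R a (\<lambda>r. opmul d n (F r) B) x y"
    by (simp add: opmul_def lc_def sum_distrib_left mult.assoc)
  finally show "opmul d n (lc R a F) B x y = lc R a (\<lambda>r. opmul d n (F r) B) x y" .
qed

lemma opmul_lc_right: "opmul d n A (lc R a F) = lc R a (\<lambda>r. opmul d n A (F r))"
proof (intro ext)
  fix x y
  have "opmul d n A (lc R a F) x y = (\<Sum>z\<in>idx d n. \<Sum>r\<in>R. a r * (A x z * F r z y))"
    by (simp add: opmul_def lc_def sum_distrib_left mult.assoc mult.left_commute)
  also have "\<dots> = (\<Sum>r\<in>R. \<Sum>z\<in>idx d n. a r * (A x z * F r z y))" by (rule sum.swap)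
  also have "\<dots> = lc R a (\<lambda>r. opmul d n A (F r)) x y"
    by (simp add: opmul_def lc_def sum_distrib_left)
  finally show "opmul d n A (lc R a F) x y = lc R a (\<lambda>r. opmul d n A (F r)) x y" .
qed

lemma optr_lc: "optr d n (lc R a F) = (\<Sum>r\<in>R. a r * optr d n (F r))"
proof -
  have "optr d n (lc R a F) = (\<Sum>x\<in>idx d n. \<Sum>r\<in>R. a r * F r x x)" by (simp add: optr_def lc_def)
  also have "\<dots> = (\<Sum>r\<in>R. \<Sum>x\<in>idx d n. a r * F r x x)" by (rule sum.swap)
  also have "\<dots> = (\<Sum>r\<in>R. a r * optr d n (F r))" by (simp add: optr_def sum_distrib_left)
  finally show ?thesis .
qed

lemma tens_lc_left: "tens p (lc R a F) B = lc R a (\<lambda>r. tens p (F r) B)"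
  by (intro ext) (simp add: tens_def lc_def sum_distrib_right mult.assoc)

lemma tens_lc_right: "tens p A (lc R a F) = lc R a (\<lambda>r. tens p A (F r))"
  by (intro ext) (simp add: tens_def lc_def sum_distrib_left mult.left_commute)

lemma idx_split_bij:
  "bij_betw (\<lambda>us. (rev (take p us), drop p us)) (idx d (2 * p)) (idx d p \<times> idx d p)"
proof (rule bij_betw_byWitness[where f' = "\<lambda>(a, b). rev a @ b"])
  show "\<forall>us\<in>idx d (2 * p). (\<lambda>(a, b). rev a @ b) (rev (take p us), drop p us) = us" by simp
  show "\<forall>ab\<in>idx d p \<times> idx d p. (rev (take p (case ab of (a, b) \<Rightarrow> rev a @ b)), drop p (case ab of (a, b) \<Rightarrow> rev a @ b)) = ab"
    by (auto simp: idx_def)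
  show "(\<lambda>us. (rev (take p us), drop p us)) ` idx d (2 * p) \<subseteq> idx d p \<times> idx d p"
  proof
    fix ab assume "ab \<in> (\<lambda>us. (rev (take p us), drop p us)) ` idx d (2 * p)"
    then obtain us where us: "us \<in> idx d (2 * p)" "ab = (rev (take p us), drop p us)" by blast
    have "set (take p us) \<subseteq> set us" "set (drop p us) \<subseteq> set us"
      by (rule set_take_subset, rule set_drop_subset)
    thus "ab \<in> idx d p \<times> idx d p" using us by (auto simp: idx_def)
  qed
  show "(\<lambda>(a, b). rev a @ b) ` (idx d p \<times> idx d p) \<subseteq> idx d (2 * p)"
    by (auto simp: idx_def)
qed

lemma tens_mult: "opmul d (2 * p) (tens p A B) (tens p C D) = tens p (opmul d p A C) (opmul d p B D)"
proof (intro ext)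
  fix zs ws
  let ?f = "\<lambda>us. (rev (take p us), drop p us)"
  let ?g = "\<lambda>ab. A (rev (take p zs)) (fst ab) * B (drop p zs) (snd ab) * (C (fst ab) (rev (take p ws)) * D (snd ab) (drop p ws))"
  have "opmul d (2 * p) (tens p A B) (tens p C D) zs ws = (\<Sum>us\<in>idx d (2 * p). ?g (?f us))"
    by (simp add: opmul_def tens_def)
  also have "\<dots> = (\<Sum>ab\<in>idx d p \<times> idx d p. ?g ab)"
    by (rule sum.reindex_bij_betw[OF idx_split_bij])
  also have "\<dots> = (\<Sum>a\<in>idx d p. \<Sum>b\<in>idx d p. ?g (a, b))"
    by (subst sum.cartesian_product) (simp add: case_prod_unfold)
  also have "\<dots> = tens p (opmul d p A C) (opmul d p B D) zs ws"
    by (simp add: tens_def opmul_def sum_product mult.assoc mult.left_commute)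
  finally show "opmul d (2 * p) (tens p A B) (tens p C D) zs ws = tens p (opmul d p A C) (opmul d p B D) zs ws" .
qed

definition eqi :: "nat \<Rightarrow> nat \<Rightarrow> op \<Rightarrow> op \<Rightarrow> bool" where
  "eqi d n A B \<longleftrightarrow> (\<forall>x\<in>idx d n. \<forall>y\<in>idx d n. A x y = B x y)"

lemma eqi_refl: "eqi d n A A"
  by (simp add: eqi_def)

lemma opmul_cong: "eqi d n A A' \<Longrightarrow> eqi d n B B' \<Longrightarrow> eqi d n (opmul d n A B) (opmul d n A' B')"
  unfolding eqi_def opmul_def by (auto intro!: sum.cong)

lemma optr_cong: "eqi d n A A' \<Longrightarrow> optr d n A = optr d n A'"
  unfolding eqi_def optr_def by (auto intro!: sum.cong)

lemma idx_take: "zs \<in> idx d (2 * p) \<Longrightarrow> rev (take p zs) \<in> idx d p"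
proof -
  assume "zs \<in> idx d (2 * p)"
  moreover have "set (take p zs) \<subseteq> set zs" by (rule set_take_subset)
  ultimately show ?thesis by (auto simp: idx_def)
qed

lemma idx_drop: "zs \<in> idx d (2 * p) \<Longrightarrow> drop p zs \<in> idx d p"
proof -
  assume "zs \<in> idx d (2 * p)"
  moreover have "set (drop p zs) \<subseteq> set zs" by (rule set_drop_subset)
  ultimately show ?thesis by (auto simp: idx_def)
qed

lemma tens_cong: "eqi d p A A' \<Longrightarrow> eqi d p B B' \<Longrightarrow> eqi d (2 * p) (tens p A B) (tens p A' B')"
  unfolding eqi_def tens_def using idx_take idx_drop by metis

definition Psi :: "nat \<Rightarrow> nat \<Rightarrow> op \<Rightarrow> op \<Rightarrow> op \<Rightarrow> op \<Rightarrow> op \<Rightarrow> op \<Rightarrow> complex" where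
  "Psi d p X Y A B C D = optr d (2 * p) (opmul d (2 * p) X
      (opmul d (2 * p) (opmul d (2 * p) (tens p A B) Y) (tens p C D)))"

lemma Psi_cong:
  assumes "eqi d p A A'" "eqi d p B B'" "eqi d p C C'" "eqi d p D D'"
  shows "Psi d p X Y A B C D = Psi d p X Y A' B' C' D'"
  unfolding Psi_def
  by (intro optr_cong opmul_cong eqi_refl tens_cong assms)

lemma Psi_lc1: "Psi d p X Y (lc R a F) B C D = (\<Sum>r\<in>R. a r * Psi d p X Y (F r) B C D)"
  unfolding Psi_def tens_lc_left opmul_lc_left opmul_lc_right optr_lc ..

lemma Psi_lc2: "Psi d p X Y A (lc R a F) C D = (\<Sum>r\<in>R. a r * Psi d p X Y A (F r) C D)"
  unfolding Psi_def tens_lc_right opmul_lc_left opmul_lc_right optr_lc ..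

lemma Psi_lc3: "Psi d p X Y A B (lc R a F) D = (\<Sum>r\<in>R. a r * Psi d p X Y A B (F r) D)"
  unfolding Psi_def tens_lc_left opmul_lc_left opmul_lc_right optr_lc ..

lemma Psi_lc4: "Psi d p X Y A B C (lc R a F) = (\<Sum>r\<in>R. a r * Psi d p X Y A B C (F r))"
  unfolding Psi_def tens_lc_right opmul_lc_left opmul_lc_right optr_lc ..

lemma sum_of_bool_unique:
  assumes "finite A" "w \<in> A" "\<And>z. z \<in> A \<Longrightarrow> P z \<longleftrightarrow> z = w"
  shows "(\<Sum>z\<in>A. f z * of_bool (P z)) = (f w :: complex)"
proof -
  have "(\<Sum>z\<in>A. f z * of_bool (P z)) = (\<Sum>z\<in>A. if z = w then f w else 0)"
    by (rule sum.cong) (use assms in auto)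
  thus ?thesis using assms by simp
qed

lemma Vperm_mult:
  assumes s: "\<sigma> permutes {1..p}" and t: "\<tau> permutes {1..p}"
    and ys: "ys \<in> idx d p" and xs: "xs \<in> idx d p"
  shows "opmul d p (Vperm p \<sigma>) (Vperm p \<tau>) ys xs = Vperm p (\<sigma> \<circ> \<tau>) ys xs"
proof -
  define w where "w = map (\<lambda>m. xs ! (inv \<tau> (Suc m) - 1)) [0..<p]"
  have it: "inv \<tau> k \<in> {1..p}" if "k \<in> {1..p}" for k
    using permutes_in_image[OF permutes_inv[OF t]] that by simp
  have is': "inv \<sigma> k \<in> {1..p}" if "k \<in> {1..p}" for k
    using permutes_in_image[OF permutes_inv[OF s]] that by simp
  have lx: "length xs = p" using xs by (simp add: idx_def)
  have wi: "w \<in> idx d p"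
  proof -
    have "xs ! (inv \<tau> (Suc m) - 1) < d" if "m < p" for m
    proof -
      have "inv \<tau> (Suc m) \<in> {1..p}" using it that by simp
      hence "inv \<tau> (Suc m) - 1 < length xs" using lx by auto
      thus ?thesis using xs by (auto simp: idx_def)
    qed
    thus ?thesis by (auto simp: idx_def w_def)
  qed
  have wk: "w ! (k - 1) = xs ! (inv \<tau> k - 1)" if "k \<in> {1..p}" for k
    using that by (auto simp: w_def)
  have uniq: "(\<forall>k\<in>{1..p}. zs ! (k - 1) = xs ! (inv \<tau> k - 1)) \<longleftrightarrow> zs = w" if zs: "zs \<in> idx d p" for zs
  proof
    assume h: "\<forall>k\<in>{1..p}. zs ! (k - 1) = xs ! (inv \<tau> k - 1)"
    show "zs = w"
    proof (rule nth_equalityI)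
      show "length zs = length w" using zs wi by (simp add: idx_def)
      fix m assume "m < length zs"
      hence m: "m < p" using zs by (simp add: idx_def)
      have "Suc m \<in> {1..p}" using m by simp
      hence "zs ! (Suc m - 1) = xs ! (inv \<tau> (Suc m) - 1)" using h by blast
      thus "zs ! m = w ! m" using m by (simp add: w_def)
    qed
  next
    assume "zs = w" thus "\<forall>k\<in>{1..p}. zs ! (k - 1) = xs ! (inv \<tau> k - 1)" using wk by simp
  qed
  have "opmul d p (Vperm p \<sigma>) (Vperm p \<tau>) ys xs
      = (\<Sum>zs\<in>idx d p. of_bool (\<forall>k\<in>{1..p}. ys ! (k - 1) = zs ! (inv \<sigma> k - 1))
          * of_bool (\<forall>k\<in>{1..p}. zs ! (k - 1) = xs ! (inv \<tau> k - 1)))"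
    by (simp add: opmul_def Vperm_def)
  also have "\<dots> = of_bool (\<forall>k\<in>{1..p}. ys ! (k - 1) = w ! (inv \<sigma> k - 1))"
    by (rule sum_of_bool_unique[OF finite_idx wi uniq])
  also have "(\<forall>k\<in>{1..p}. ys ! (k - 1) = w ! (inv \<sigma> k - 1))
      \<longleftrightarrow> (\<forall>k\<in>{1..p}. ys ! (k - 1) = xs ! (inv (\<sigma> \<circ> \<tau>) k - 1))"
  proof -
    have "inv (\<sigma> \<circ> \<tau>) = inv \<tau> \<circ> inv \<sigma>" using s t by (simp add: o_inv_distrib permutes_bij)
    thus ?thesis using wk is' by auto
  qed
  finally show ?thesis by (simp add: Vperm_def)
qed

lemma inv_comp_perm2:
  assumes "s permutes S" "r permutes S"
  shows "inv (s \<circ> r) \<circ> s = inv r"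
proof -
  have "inv (s \<circ> r) = inv r \<circ> inv s" using assms by (simp add: o_inv_distrib permutes_bij)
  thus ?thesis using permutes_inv_o(2)[OF assms(1)] by (simp add: comp_assoc)
qed

context ptn
begin

lemma sum_list_p: "sum_list \<mu> = p"
  using P by (simp add: is_partition_def)

lemma Eunit_p: "Eunit \<mu> i j = (\<lambda>ys xs. (of_nat (dim \<mu>) / of_nat (fact p)) *
      (\<Sum>\<sigma>\<in>{\<sigma>. \<sigma> permutes {1..p}}. yrep \<mu> (inv \<sigma>) j i * Vperm p \<sigma> ys xs))"
  by (simp add: Eunit_def sum_list_p)

lemma VE:
  assumes s: "\<sigma> permutes {1..p}" and i: "i \<in> {1..dim \<mu>}" and j: "j \<in> {1..dim \<mu>}"
  shows "eqi d p (opmul d p (Vperm p \<sigma>) (Eunit \<mu> i j)) (lc {1..dim \<mu>} (\<lambda>r. yrep \<mu> \<sigma> r i) (\<lambda>r. Eunit \<mu> r j))"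
  unfolding eqi_def
proof (intro ballI)
  fix ys xs assume ys: "ys \<in> idx d p" and xs: "xs \<in> idx d p"
  let ?P = "{\<sigma>. \<sigma> permutes {1..p}}"
  let ?I = "{1..dim \<mu>}"
  let ?c = "of_nat (dim \<mu>) / of_nat (fact p) :: complex"
  have "opmul d p (Vperm p \<sigma>) (Eunit \<mu> i j) ys xs
      = (\<Sum>zs\<in>idx d p. \<Sum>\<rho>\<in>?P. Vperm p \<sigma> ys zs * (?c * (yrep \<mu> (inv \<rho>) j i * Vperm p \<rho> zs xs)))"
    by (simp add: opmul_def Eunit_p sum_distrib_left)
  also have "\<dots> = (\<Sum>\<rho>\<in>?P. \<Sum>zs\<in>idx d p. Vperm p \<sigma> ys zs * (?c * (yrep \<mu> (inv \<rho>) j i * Vperm p \<rho> zs xs)))"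
    by (rule sum.swap)
  also have "\<dots> = (\<Sum>\<rho>\<in>?P. ?c * yrep \<mu> (inv \<rho>) j i * opmul d p (Vperm p \<sigma>) (Vperm p \<rho>) ys xs)"
    by (simp add: opmul_def sum_distrib_left mult_ac)
  also have "\<dots> = (\<Sum>\<rho>\<in>?P. ?c * yrep \<mu> (inv \<rho>) j i * Vperm p (\<sigma> \<circ> \<rho>) ys xs)"
    by (rule sum.cong[OF refl]) (simp add: Vperm_mult[OF s _ ys xs])
  also have "\<dots> = (\<Sum>\<rho>\<in>?P. ?c * yrep \<mu> (inv \<rho> \<circ> \<sigma>) j i * Vperm p \<rho> ys xs)"
  proof -
    have "(\<Sum>\<rho>\<in>?P. ?c * yrep \<mu> (inv \<rho> \<circ> \<sigma>) j i * Vperm p \<rho> ys xs)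
        = (\<Sum>\<rho>\<in>?P. ?c * yrep \<mu> (inv (\<sigma> \<circ> \<rho>) \<circ> \<sigma>) j i * Vperm p (\<sigma> \<circ> \<rho>) ys xs)"
      by (rule setum_permutations_compose_left[OF s])
    also have "\<dots> = (\<Sum>\<rho>\<in>?P. ?c * yrep \<mu> (inv \<rho>) j i * Vperm p (\<sigma> \<circ> \<rho>) ys xs)"
      by (rule sum.cong[OF refl]) (simp add: inv_comp_perm2[OF s])
    finally show ?thesis by simp
  qed
  also have "\<dots> = (\<Sum>\<rho>\<in>?P. \<Sum>r\<in>?I. yrep \<mu> \<sigma> r i * (?c * (yrep \<mu> (inv \<rho>) j r * Vperm p \<rho> ys xs)))"
  proof (rule sum.cong[OF refl])
    fix \<rho> assume "\<rho> \<in> ?P"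
    hence ri: "inv \<rho> permutes {1..p}" by (simp add: permutes_inv)
    show "?c * yrep \<mu> (inv \<rho> \<circ> \<sigma>) j i * Vperm p \<rho> ys xs
        = (\<Sum>r\<in>?I. yrep \<mu> \<sigma> r i * (?c * (yrep \<mu> (inv \<rho>) j r * Vperm p \<rho> ys xs)))"
      using yrep_hom[OF ri s j i] by (simp add: matmul_def sum_distrib_left sum_distrib_right mult_ac)
  qed
  also have "\<dots> = (\<Sum>r\<in>?I. \<Sum>\<rho>\<in>?P. yrep \<mu> \<sigma> r i * (?c * (yrep \<mu> (inv \<rho>) j r * Vperm p \<rho> ys xs)))"
    by (rule sum.swap)
  also have "\<dots> = lc ?I (\<lambda>r. yrep \<mu> \<sigma> r i) (\<lambda>r. Eunit \<mu> r j) ys xs"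
    by (simp add: lc_def Eunit_p sum_distrib_left)
  finally show "opmul d p (Vperm p \<sigma>) (Eunit \<mu> i j) ys xs = lc ?I (\<lambda>r. yrep \<mu> \<sigma> r i) (\<lambda>r. Eunit \<mu> r j) ys xs" .
qed

lemma EV:
  assumes s: "\<sigma> permutes {1..p}" and i: "i \<in> {1..dim \<mu>}" and j: "j \<in> {1..dim \<mu>}"
  shows "eqi d p (opmul d p (Eunit \<mu> i j) (Vperm p \<sigma>)) (lc {1..dim \<mu>} (\<lambda>r. yrep \<mu> \<sigma> j r) (\<lambda>r. Eunit \<mu> i r))"
  unfolding eqi_def
proof (intro ballI)
  fix ys xs assume ys: "ys \<in> idx d p" and xs: "xs \<in> idx d p"
  let ?P = "{\<sigma>. \<sigma> permutes {1..p}}"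
  let ?I = "{1..dim \<mu>}"
  let ?c = "of_nat (dim \<mu>) / of_nat (fact p) :: complex"
  have "opmul d p (Eunit \<mu> i j) (Vperm p \<sigma>) ys xs
      = (\<Sum>zs\<in>idx d p. \<Sum>\<rho>\<in>?P. ?c * (yrep \<mu> (inv \<rho>) j i * Vperm p \<rho> ys zs) * Vperm p \<sigma> zs xs)"
    by (simp add: opmul_def Eunit_p sum_distrib_left sum_distrib_right)
  also have "\<dots> = (\<Sum>\<rho>\<in>?P. \<Sum>zs\<in>idx d p. ?c * (yrep \<mu> (inv \<rho>) j i * Vperm p \<rho> ys zs) * Vperm p \<sigma> zs xs)"
    by (rule sum.swap)
  also have "\<dots> = (\<Sum>\<rho>\<in>?P. ?c * yrep \<mu> (inv \<rho>) j i * opmul d p (Vperm p \<rho>) (Vperm p \<sigma>) ys xs)"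
    by (simp add: opmul_def sum_distrib_left mult_ac)
  also have "\<dots> = (\<Sum>\<rho>\<in>?P. ?c * yrep \<mu> (inv \<rho>) j i * Vperm p (\<rho> \<circ> \<sigma>) ys xs)"
    by (rule sum.cong[OF refl]) (simp add: Vperm_mult[OF _ s ys xs])
  also have "\<dots> = (\<Sum>\<rho>\<in>?P. ?c * yrep \<mu> (\<sigma> \<circ> inv \<rho>) j i * Vperm p \<rho> ys xs)"
  proof -
    have "(\<Sum>\<rho>\<in>?P. ?c * yrep \<mu> (\<sigma> \<circ> inv \<rho>) j i * Vperm p \<rho> ys xs)
        = (\<Sum>\<rho>\<in>?P. ?c * yrep \<mu> (\<sigma> \<circ> inv (\<rho> \<circ> \<sigma>)) j i * Vperm p (\<rho> \<circ> \<sigma>) ys xs)"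
      by (rule sum_permutations_compose_right[OF s])
    also have "\<dots> = (\<Sum>\<rho>\<in>?P. ?c * yrep \<mu> (inv \<rho>) j i * Vperm p (\<rho> \<circ> \<sigma>) ys xs)"
      by (rule sum.cong[OF refl]) (simp add: inv_comp_perm[OF _ s])
    finally show ?thesis by simp
  qed
  also have "\<dots> = (\<Sum>\<rho>\<in>?P. \<Sum>r\<in>?I. yrep \<mu> \<sigma> j r * (?c * (yrep \<mu> (inv \<rho>) r i * Vperm p \<rho> ys xs)))"
  proof (rule sum.cong[OF refl])
    fix \<rho> assume "\<rho> \<in> ?P"
    hence ri: "inv \<rho> permutes {1..p}" by (simp add: permutes_inv)
    show "?c * yrep \<mu> (\<sigma> \<circ> inv \<rho>) j i * Vperm p \<rho> ys xs
        = (\<Sum>r\<in>?I. yrep \<mu> \<sigma> j r * (?c * (yrep \<mu> (inv \<rho>) r i * Vperm p \<rho> ys xs)))"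
      using yrep_hom[OF s ri j i] by (simp add: matmul_def sum_distrib_left sum_distrib_right mult_ac)
  qed
  also have "\<dots> = (\<Sum>r\<in>?I. \<Sum>\<rho>\<in>?P. yrep \<mu> \<sigma> j r * (?c * (yrep \<mu> (inv \<rho>) r i * Vperm p \<rho> ys xs)))"
    by (rule sum.swap)
  also have "\<dots> = lc ?I (\<lambda>r. yrep \<mu> \<sigma> j r) (\<lambda>r. Eunit \<mu> i r) ys xs"
    by (simp add: lc_def Eunit_p sum_distrib_left)
  finally show "opmul d p (Eunit \<mu> i j) (Vperm p \<sigma>) ys xs = lc ?I (\<lambda>r. yrep \<mu> \<sigma> j r) (\<lambda>r. Eunit \<mu> i r) ys xs" .
qed

end

lemma swap_in4:
  "(\<Sum>x\<in>A. \<Sum>r\<in>R. \<Sum>s\<in>S. \<Sum>t\<in>T. \<Sum>u\<in>U. g x r s t u)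
   = (\<Sum>r\<in>R. \<Sum>s\<in>S. \<Sum>t\<in>T. \<Sum>u\<in>U. \<Sum>x\<in>A. (g x r s t u :: complex))"
proof -
  have "(\<Sum>x\<in>A. \<Sum>r\<in>R. \<Sum>s\<in>S. \<Sum>t\<in>T. \<Sum>u\<in>U. g x r s t u)
      = (\<Sum>r\<in>R. \<Sum>x\<in>A. \<Sum>s\<in>S. \<Sum>t\<in>T. \<Sum>u\<in>U. g x r s t u)" by (rule sum.swap)
  also have "\<dots> = (\<Sum>r\<in>R. \<Sum>s\<in>S. \<Sum>x\<in>A. \<Sum>t\<in>T. \<Sum>u\<in>U. g x r s t u)"
    by (rule sum.cong[OF refl]) (rule sum.swap)
  also have "\<dots> = (\<Sum>r\<in>R. \<Sum>s\<in>S. \<Sum>t\<in>T. \<Sum>x\<in>A. \<Sum>u\<in>U. g x r s t u)"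
    by (rule sum.cong[OF refl], rule sum.cong[OF refl]) (rule sum.swap)
  also have "\<dots> = (\<Sum>r\<in>R. \<Sum>s\<in>S. \<Sum>t\<in>T. \<Sum>u\<in>U. \<Sum>x\<in>A. g x r s t u)"
    by (rule sum.cong[OF refl], rule sum.cong[OF refl], rule sum.cong[OF refl]) (rule sum.swap)
  finally show ?thesis .
qed

lemma rearr:
  "(\<Sum>x\<in>A. c * (\<Sum>y\<in>B. 1 * (\<Sum>r\<in>R. a1 x r * (\<Sum>s\<in>S. a2 y s * (\<Sum>t\<in>T. a3 x t * (\<Sum>u\<in>U. a4 y u * g r s t u))))))
   = c * (\<Sum>r\<in>R. \<Sum>s\<in>S. \<Sum>t\<in>T. \<Sum>u\<in>U. (\<Sum>x\<in>A. a1 x r * a3 x t) * (\<Sum>y\<in>B. a2 y s * a4 y u) * (g r s t u :: complex))"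
proof -
  define F where "F x y r s t u = c * (a1 x r * a3 x t * (a2 y s * a4 y u) * g r s t u)" for x y r s t u
  have "(\<Sum>x\<in>A. c * (\<Sum>y\<in>B. 1 * (\<Sum>r\<in>R. a1 x r * (\<Sum>s\<in>S. a2 y s * (\<Sum>t\<in>T. a3 x t * (\<Sum>u\<in>U. a4 y u * g r s t u))))))
      = (\<Sum>x\<in>A. \<Sum>y\<in>B. \<Sum>r\<in>R. \<Sum>s\<in>S. \<Sum>t\<in>T. \<Sum>u\<in>U. F x y r s t u)"
    by (simp add: F_def sum_distrib_left mult_ac)
  also have "\<dots> = (\<Sum>x\<in>A. \<Sum>r\<in>R. \<Sum>s\<in>S. \<Sum>t\<in>T. \<Sum>u\<in>U. \<Sum>y\<in>B. F x y r s t u)"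
    by (rule sum.cong[OF refl]) (rule swap_in4)
  also have "\<dots> = (\<Sum>r\<in>R. \<Sum>s\<in>S. \<Sum>t\<in>T. \<Sum>u\<in>U. \<Sum>x\<in>A. \<Sum>y\<in>B. F x y r s t u)"
    by (rule swap_in4)
  also have "\<dots> = (\<Sum>r\<in>R. \<Sum>s\<in>S. \<Sum>t\<in>T. \<Sum>u\<in>U. \<Sum>y\<in>B. \<Sum>x\<in>A. F x y r s t u)"
    by (rule sum.cong[OF refl], rule sum.cong[OF refl], rule sum.cong[OF refl], rule sum.cong[OF refl]) (rule sum.swap)
  also have "\<dots> = c * (\<Sum>r\<in>R. \<Sum>s\<in>S. \<Sum>t\<in>T. \<Sum>u\<in>U. (\<Sum>x\<in>A. a1 x r * a3 x t) * (\<Sum>y\<in>B. a2 y s * a4 y u) * g r s t u)"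
    by (simp add: F_def sum_distrib_left sum_distrib_right mult_ac)
  finally show ?thesis .
qed

theorem lemma22:
  fixes d p :: nat and X Y :: op and \<mu> \<nu> \<mu>' \<nu>' :: "nat list"
    and i j k l i' j' k' l' :: nat
  assumes "d \<ge> 2" and "p \<ge> 2"
    and "is_partition p \<mu>" "length \<mu> \<le> d"
    and "is_partition p \<nu>" "length \<nu> \<le> d"
    and "is_partition p \<mu>'" "length \<mu>' \<le> d"
    and "is_partition p \<nu>'" "length \<nu>' \<le> d"
    and "i \<in> {1..dim \<mu>}" "j \<in> {1..dim \<mu>}" "k \<in> {1..dim \<nu>}" "l \<in> {1..dim \<nu>}"
    and "i' \<in> {1..dim \<mu>'}" "j' \<in> {1..dim \<mu>'}" "k' \<in> {1..dim \<nu>'}" "l' \<in> {1..dim \<nu>'}"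
  shows "optr d (2*p)
           (opmul d (2*p) (opmul d (2*p) (opmul d (2*p) (twirl d p X)
              (tens p (Eunit \<mu> i j) (Eunit \<nu> k l))) Y)
              (tens p (Eunit \<mu>' i' j') (Eunit \<nu>' k' l')))
       = (if \<mu> = \<mu>' \<and> \<nu> = \<nu>' \<and> i = j' \<and> k = l' then
            (1 / (of_nat (dim \<mu>) * of_nat (dim \<nu>))) *
            (\<Sum>r\<in>{1..dim \<mu>}. \<Sum>s\<in>{1..dim \<nu>}.
               optr d (2*p)
                 (opmul d (2*p) (opmul d (2*p) (opmul d (2*p) X
                    (tens p (Eunit \<mu> r j) (Eunit \<nu> s l))) Y)
                    (tens p (Eunit \<mu> i' r) (Eunit \<nu> k' s))))
          else 0)"
proof -
  note P = assms(3,5,7,9)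
  interpret Am: ptn \<mu> p by unfold_locales (rule assms(3))
  interpret An: ptn \<nu> p by unfold_locales (rule assms(5))
  interpret Am': ptn \<mu>' p by unfold_locales (rule assms(7))
  interpret An': ptn \<nu>' p by unfold_locales (rule assms(9))
  have p2: "2 \<le> p" by (rule assms(2))
  let ?P = "{\<sigma>. \<sigma> permutes {1..p}}"
  let ?c = "1 / (of_nat (fact p))\<^sup>2 :: complex"
  define Fw where "Fw \<sigma>1 \<sigma>2 = opmul d (2*p) (opmul d (2*p) (tens p (Vperm p \<sigma>1) (Vperm p \<sigma>2)) X)
      (tens p (Vperm p (inv \<sigma>1)) (Vperm p (inv \<sigma>2)))" for \<sigma>1 \<sigma>2
  have tw: "twirl d p X = lc ?P (\<lambda>_. ?c) (\<lambda>\<sigma>1. lc ?P (\<lambda>_. 1) (\<lambda>\<sigma>2. Fw \<sigma>1 \<sigma>2))"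
    by (intro ext) (simp add: twirl_def lc_def Fw_def sum_distrib_left)
  define PP where "PP = tens p (Eunit \<mu> i j) (Eunit \<nu> k l)"
  define QQ where "QQ = tens p (Eunit \<mu>' i' j') (Eunit \<nu>' k' l')"
  define M where "M = opmul d (2*p) (opmul d (2*p) PP Y) QQ"
  define a1 where "a1 \<sigma> r = yrep \<mu> (inv \<sigma>) r i" for \<sigma> r
  define a2 where "a2 \<sigma> s = yrep \<nu> (inv \<sigma>) s k" for \<sigma> s
  define a3 where "a3 \<sigma> r = yrep \<mu>' \<sigma> j' r" for \<sigma> r
  define a4 where "a4 \<sigma> s = yrep \<nu>' \<sigma> l' s" for \<sigma> s
  define G where "G r s r' s' = Psi d p X Y (Eunit \<mu> r j) (Eunit \<nu> s l) (Eunit \<mu>' i' r') (Eunit \<nu>' k' s')" for r s r' s'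
  let ?I1 = "{1..dim \<mu>}" and ?I2 = "{1..dim \<nu>}" and ?I3 = "{1..dim \<mu>'}" and ?I4 = "{1..dim \<nu>'}"
  have L1: "optr d (2*p) (opmul d (2*p) (opmul d (2*p) (opmul d (2*p) (twirl d p X)
              (tens p (Eunit \<mu> i j) (Eunit \<nu> k l))) Y) (tens p (Eunit \<mu>' i' j') (Eunit \<nu>' k' l')))
        = optr d (2*p) (opmul d (2*p) (twirl d p X) M)"
    by (simp add: M_def PP_def QQ_def opmul_assoc)
  also have "\<dots> = (\<Sum>\<sigma>1\<in>?P. ?c * (\<Sum>\<sigma>2\<in>?P. 1 * optr d (2*p) (opmul d (2*p) (Fw \<sigma>1 \<sigma>2) M)))"
    unfolding tw opmul_lc_left optr_lc ..
  also have "\<dots> = (\<Sum>\<sigma>1\<in>?P. ?c * (\<Sum>\<sigma>2\<in>?P. 1 * (\<Sum>r\<in>?I1. a1 \<sigma>1 r * (\<Sum>s\<in>?I2. a2 \<sigma>2 s *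
          (\<Sum>r'\<in>?I3. a3 \<sigma>1 r' * (\<Sum>s'\<in>?I4. a4 \<sigma>2 s' * G r s r' s'))))))"
  proof (rule sum.cong[OF refl], rule arg_cong[where f = "\<lambda>x. ?c * x"], rule sum.cong[OF refl])
    fix \<sigma>1 \<sigma>2 assume s1: "\<sigma>1 \<in> ?P" and s2: "\<sigma>2 \<in> ?P"
    hence s1: "\<sigma>1 permutes {1..p}" and s2: "\<sigma>2 permutes {1..p}" by auto
    have s1i: "inv \<sigma>1 permutes {1..p}" by (rule permutes_inv[OF s1])
    have s2i: "inv \<sigma>2 permutes {1..p}" by (rule permutes_inv[OF s2])
    define T where "T = tens p (Vperm p \<sigma>1) (Vperm p \<sigma>2)"
    define T' where "T' = tens p (Vperm p (inv \<sigma>1)) (Vperm p (inv \<sigma>2))"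
    have "optr d (2*p) (opmul d (2*p) (Fw \<sigma>1 \<sigma>2) M) = optr d (2*p) (opmul d (2*p) T (opmul d (2*p) X (opmul d (2*p) T' M)))"
      by (simp add: Fw_def T_def T'_def opmul_assoc)
    also have "\<dots> = optr d (2*p) (opmul d (2*p) (opmul d (2*p) X (opmul d (2*p) T' M)) T)"
      by (rule optr_comm)
    also have "\<dots> = optr d (2*p) (opmul d (2*p) X (opmul d (2*p) (opmul d (2*p) (opmul d (2*p) T' PP) Y) (opmul d (2*p) QQ T)))"
      by (simp add: M_def opmul_assoc)
    also have "\<dots> = Psi d p X Y (opmul d p (Vperm p (inv \<sigma>1)) (Eunit \<mu> i j)) (opmul d p (Vperm p (inv \<sigma>2)) (Eunit \<nu> k l))
        (opmul d p (Eunit \<mu>' i' j') (Vperm p \<sigma>1)) (opmul d p (Eunit \<nu>' k' l') (Vperm p \<sigma>2))"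
      by (simp add: Psi_def T_def T'_def PP_def QQ_def tens_mult)
    also have "\<dots> = Psi d p X Y (lc ?I1 (a1 \<sigma>1) (\<lambda>r. Eunit \<mu> r j)) (lc ?I2 (a2 \<sigma>2) (\<lambda>s. Eunit \<nu> s l))
        (lc ?I3 (a3 \<sigma>1) (\<lambda>r. Eunit \<mu>' i' r)) (lc ?I4 (a4 \<sigma>2) (\<lambda>s. Eunit \<nu>' k' s))"
      unfolding a1_def a2_def a3_def a4_def
      by (rule Psi_cong[OF Am.VE[OF s1i assms(11,12)] An.VE[OF s2i assms(13,14)]
                           Am'.EV[OF s1 assms(15,16)] An'.EV[OF s2 assms(17,18)]])
    also have "\<dots> = (\<Sum>r\<in>?I1. a1 \<sigma>1 r * (\<Sum>s\<in>?I2. a2 \<sigma>2 s *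
          (\<Sum>r'\<in>?I3. a3 \<sigma>1 r' * (\<Sum>s'\<in>?I4. a4 \<sigma>2 s' * G r s r' s'))))"
      unfolding G_def by (simp only: Psi_lc1, simp only: Psi_lc2, simp only: Psi_lc3, simp only: Psi_lc4)
    finally show "1 * optr d (2*p) (opmul d (2*p) (Fw \<sigma>1 \<sigma>2) M) = 1 * (\<Sum>r\<in>?I1. a1 \<sigma>1 r * (\<Sum>s\<in>?I2. a2 \<sigma>2 s *
          (\<Sum>r'\<in>?I3. a3 \<sigma>1 r' * (\<Sum>s'\<in>?I4. a4 \<sigma>2 s' * G r s r' s'))))" by simp
  qed
  also have "\<dots> = ?c * (\<Sum>r\<in>?I1. \<Sum>s\<in>?I2. \<Sum>r'\<in>?I3. \<Sum>s'\<in>?I4.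
        (\<Sum>x\<in>?P. a1 x r * a3 x r') * (\<Sum>y\<in>?P. a2 y s * a4 y s') * G r s r' s')"
    by (rule rearr)
  also have "\<dots> = ?c * (\<Sum>r\<in>?I1. \<Sum>s\<in>?I2. \<Sum>r'\<in>?I3. \<Sum>s'\<in>?I4.
        (if \<mu> = \<mu>' \<and> r = r' \<and> i = j' then of_nat (fact p) / of_nat (dim \<mu>) else 0) *
        (if \<nu> = \<nu>' \<and> s = s' \<and> k = l' then of_nat (fact p) / of_nat (dim \<nu>) else 0) * G r s r' s')"
  proof (intro arg_cong[where f = "\<lambda>x. ?c * x"] sum.cong refl)
    fix r s r' s' assume r: "r \<in> ?I1" and s: "s \<in> ?I2" and r': "r' \<in> ?I3" and s': "s' \<in> ?I4"
    have S1: "(\<Sum>x\<in>?P. a1 x r * a3 x r') = (if \<mu> = \<mu>' \<and> r = r' \<and> i = j' then of_nat (fact p) / of_nat (dim \<mu>) else 0)"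
      unfolding a1_def a3_def by (rule schur[OF assms(3) assms(7) p2 r assms(11) assms(16) r'])
    have S2: "(\<Sum>y\<in>?P. a2 y s * a4 y s') = (if \<nu> = \<nu>' \<and> s = s' \<and> k = l' then of_nat (fact p) / of_nat (dim \<nu>) else 0)"
      unfolding a2_def a4_def by (rule schur[OF assms(5) assms(9) p2 s assms(13) assms(18) s'])
    show "(\<Sum>x\<in>?P. a1 x r * a3 x r') * (\<Sum>y\<in>?P. a2 y s * a4 y s') * G r s r' s' =
        (if \<mu> = \<mu>' \<and> r = r' \<and> i = j' then of_nat (fact p) / of_nat (dim \<mu>) else 0) *
        (if \<nu> = \<nu>' \<and> s = s' \<and> k = l' then of_nat (fact p) / of_nat (dim \<nu>) else 0) * G r s r' s'"
      by (simp only: S1 S2)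
  qed
  also have "\<dots> = (if \<mu> = \<mu>' \<and> \<nu> = \<nu>' \<and> i = j' \<and> k = l' then
            (1 / (of_nat (dim \<mu>) * of_nat (dim \<nu>))) *
            (\<Sum>r\<in>{1..dim \<mu>}. \<Sum>s\<in>{1..dim \<nu>}.
               optr d (2*p)
                 (opmul d (2*p) (opmul d (2*p) (opmul d (2*p) X
                    (tens p (Eunit \<mu> r j) (Eunit \<nu> s l))) Y)
                    (tens p (Eunit \<mu> i' r) (Eunit \<nu> k' s))))
          else 0)"
  proof (cases "\<mu> = \<mu>' \<and> \<nu> = \<nu>' \<and> i = j' \<and> k = l'")
    case False
    have z: "(if \<mu> = \<mu>' \<and> r = r' \<and> i = j' then of_nat (fact p) / of_nat (dim \<mu>) else 0) *
        (if \<nu> = \<nu>' \<and> s = s' \<and> k = l' then of_nat (fact p) / of_nat (dim \<nu>) else 0) * G r s r' s' = (0::complex)"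
      for r s r' s' using False by auto
    show ?thesis using False by (simp only: z sum.neutral_const mult_zero_right if_False)
  next
    case True
    hence e: "\<mu>' = \<mu>" "\<nu>' = \<nu>" "j' = i" "l' = k" by auto
    define A where "A = (of_nat (fact p) / of_nat (dim \<mu>) :: complex)"
    define B where "B = (of_nat (fact p) / of_nat (dim \<nu>) :: complex)"
    have inner: "(\<Sum>r'\<in>?I3. \<Sum>s'\<in>?I4.
        (if \<mu> = \<mu>' \<and> r = r' \<and> i = j' then of_nat (fact p) / of_nat (dim \<mu>) else 0) *
        (if \<nu> = \<nu>' \<and> s = s' \<and> k = l' then of_nat (fact p) / of_nat (dim \<nu>) else 0) * G r s r' s')
        = A * B * G r s r s" if r: "r \<in> ?I1" and s: "s \<in> ?I2" for r s
    proof -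
      have "(\<Sum>r'\<in>?I3. \<Sum>s'\<in>?I4.
          (if \<mu> = \<mu>' \<and> r = r' \<and> i = j' then of_nat (fact p) / of_nat (dim \<mu>) else 0) *
          (if \<nu> = \<nu>' \<and> s = s' \<and> k = l' then of_nat (fact p) / of_nat (dim \<nu>) else 0) * G r s r' s')
          = (\<Sum>r'\<in>?I1. \<Sum>s'\<in>?I2. if r' = r then (if s' = s then A * B * G r s r' s' else 0) else 0)"
        using e by (intro sum.cong refl) (auto simp: A_def B_def)
      also have "\<dots> = (\<Sum>r'\<in>?I1. if r' = r then (\<Sum>s'\<in>?I2. if s' = s then A * B * G r s r' s' else 0) else 0)"
        by (intro sum.cong refl) auto
      also have "\<dots> = A * B * G r s r s" using r s by simp
      finally show ?thesis .
    qed
    have "?c * (\<Sum>r\<in>?I1. \<Sum>s\<in>?I2. \<Sum>r'\<in>?I3. \<Sum>s'\<in>?I4.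
        (if \<mu> = \<mu>' \<and> r = r' \<and> i = j' then of_nat (fact p) / of_nat (dim \<mu>) else 0) *
        (if \<nu> = \<nu>' \<and> s = s' \<and> k = l' then of_nat (fact p) / of_nat (dim \<nu>) else 0) * G r s r' s')
        = ?c * (\<Sum>r\<in>?I1. \<Sum>s\<in>?I2. A * B * G r s r s)"
      by (intro arg_cong[where f = "\<lambda>x. ?c * x"] sum.cong refl) (rule inner)
    also have "\<dots> = (?c * A * B) * (\<Sum>r\<in>?I1. \<Sum>s\<in>?I2. G r s r s)"
      by (simp add: sum_distrib_left mult_ac)
    also have "?c * A * B = 1 / (of_nat (dim \<mu>) * of_nat (dim \<nu>))"
    proof -
      have "(of_nat (fact p) :: complex) \<noteq> 0" by simp
      thus ?thesis by (simp add: A_def B_def power2_eq_square field_simps)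
    qed
    also have "(\<Sum>r\<in>?I1. \<Sum>s\<in>?I2. G r s r s) = (\<Sum>r\<in>{1..dim \<mu>}. \<Sum>s\<in>{1..dim \<nu>}.
               optr d (2*p)
                 (opmul d (2*p) (opmul d (2*p) (opmul d (2*p) X
                    (tens p (Eunit \<mu> r j) (Eunit \<nu> s l))) Y)
                    (tens p (Eunit \<mu> i' r) (Eunit \<nu> k' s))))"
      using e by (intro sum.cong refl) (simp add: G_def Psi_def opmul_assoc)
    finally show ?thesis using True by simp
  qed
  finally show ?thesis .
qed

end
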